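(* Let $m\ge4$ and let $\mathcal W_1$ be an $m\times m$ quadrilateral labyrinth set in $Q$. Then for every $n\ge1$, the set $Q\setminus L_n$ is neither path connected nor connected.
   Context: Let $Q$ be a convex quadrilateral in $\mathbb{R}^2$. Divide $Q$ into two triangles by its shorter diagonal (either diagonal if they have equal length). Label the vertices $Q_1,Q_2,Q_3,Q_4$ anticlockwise, starting at an endpoint of that diagonal, so that the diagonal is $Q_1Q_3$. Let $\Delta_1$ be the closed triangle $Q_1Q_2Q_3$ and $\Delta_2$ the closed triangle $Q_3Q_4Q_1$. Every $x\in Q$ has a unique representation $x=\sum_{i=1}^4\alpha_iQ_i$, defined as follows. If $x\in\Delta_1$, then $\alpha_4=0$ and $(\alpha_1,\alpha_2,\alpha_3)$ are the barycentric coordinates of $x$ in $\Delta_1$. If $x\in\Delta_2$, then $\alpha_2=0$ and $(\alpha_1,\alpha_3,\alpha_4)$ are the barycentric coordinates of $x$ in $\Delta_2$. For an ordered quadruple $V=(V_1,\dots,V_4)$ define $P_V:Q\to\mathbb{R}^2$ by $P_V(x)=\sum_i\alpha_iV_i$. For an integer $m\ge2$, define the following index sets: - $A_1=\{(k_1,k_2,k_3,0)\in\mathbb{Z}_{\ge0}^4:k_1+k_2+k_3=m-1,\ k_2\ne0\}$, - $A_2=\{(k_1,0,k_3,k_4)\in\mathbb{Z}_{\ge0}^4:k_1+k_3+k_4=m-1,\ k_4\ne0\}$, - $A_3=\{(k_1,0,k_3,0)\in\mathbb{Z}_{\ge0}^4:k_1+k_3=m-1\}$, - $A=A_1\cup A_2\cup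 A_3$. For $k\in A$, let $S_m(k)$ be the quadrilateral with ordered vertices $R_1R_2R_3R_4$ given below. - If $k\in A_1$: $R_1=\frac{(k_1+1)Q_1+k_2Q_2+k_3Q_3}{m}$, $R_2=\frac{k_1Q_1+(k_2+1)Q_2+k_3Q_3}{m}$, $R_3=\frac{k_1Q_1+k_2Q_2+(k_3+1)Q_3}{m}$, $R_4=\frac{(k_1+1)Q_1+(k_2-1)Q_2+(k_3+1)Q_3}{m}$. - If $k\in A_2$: $R_1=\frac{(k_1+1)Q_1+k_3Q_3+k_4Q_4}{m}$, $R_2=\frac{(k_1+1)Q_1+(k_3+1)Q_3+(k_4-1)Q_4}{m}$, $R_3=\frac{k_1Q_1+(k_3+1)Q_3+k_4Q_4}{m}$, $R_4=\frac{k_1Q_1+k_3Q_3+(k_4+1)Q_4}{m}$. - If $k\in A_3$: $R_1=\frac{(k_1+1)Q_1+k_3Q_3}{m}$, $R_2=\frac{k_1Q_1+Q_2+k_3Q_3}{m}$, $R_3=\frac{k_1Q_1+(k_3+1)Q_3}{m}$, $R_4=\frac{k_1Q_1+k_3Q_3+Q_4}{m}$. Let $\mathcal S_m=\{S_m(k):k\in A\}$. For $\mathcal W\subseteq\mathcal S_m$, the graph $\mathcal G(\mathcal W)$ has vertex set $\mathcal W$, with two elements adjacent iff they have a common side. An $m\times m$ quadrilateral labyrinth set ($m\ge4$) is a set $\mathcal W_1\subseteq\mathcal S_m$ satisfying three properties. (1) Tree property: $\mathcal G(\mathcal W_1)$ is a tree. (2) Exit property: there is exactly one $(k_1,k_2,0,0)\in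 A$ with $S_m(k_1,k_2,0,0)\in\mathcal W_1$ and $S_m(0,0,k_2,k_1)\in\mathcal W_1$. There is also exactly one $(k_1,0,0,k_4)\in A$ with $S_m(k_1,0,0,k_4)\in\mathcal W_1$ and $S_m(0,k_1,k_4,0)\in\mathcal W_1$. (3) Corner property: $\mathcal W_1$ contains at most one element of $\{S_m(m-1,0,0,0),S_m(0,0,m-1,0)\}$ and at most one element of $\{S_m(0,m-1,0,0),S_m(0,0,0,m-1)\}$. Define recursively for $n\ge2$: $\mathcal W_n=\{P_{W}(W'):W'\in\mathcal W_1,\ W\in\mathcal W_{n-1}\}$. Here $P_W(W')$ is the quadrilateral whose ordered vertices are the images under $P_W$ of the ordered vertices of $W'$. Let $L_n=\bigcup_{W\in\mathcal W_n}W$ (closed regions). *)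

theory Defs
  imports "HOL-Analysis.Analysis"
begin

type_synonym pt = "real^2"
type_synonym quad = "pt \<times> pt \<times> pt \<times> pt"
type_synonym idx = "nat \<times> nat \<times> nat \<times> nat"

definition orient :: "pt \<Rightarrow> pt \<Rightarrow> pt \<Rightarrow> real" where
  "orient a b c = (b$1 - a$1) * (c$2 - a$2) - (b$2 - a$2) * (c$1 - a$1)"

definition convex_quad_ccw :: "quad \<Rightarrow> bool" where
  "convex_quad_ccw Qs = (case Qs of (Q1,Q2,Q3,Q4) \<Rightarrow>
     orient Q1 Q2 Q3 > 0 \<and> orient Q2 Q3 Q4 > 0 \<and> orient Q3 Q4 Q1 > 0 \<and> orient Q4 Q1 Q2 > 0)"

definition region :: "quad \<Rightarrow> pt set" where
  "region Qs = (case Qs of (Q1,Q2,Q3,Q4) \<Rightarrow> convex hull {Q1,Q2,Q3,Q4})"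

definition bary3 :: "pt \<Rightarrow> pt \<Rightarrow> pt \<Rightarrow> pt \<Rightarrow> real \<times> real \<times> real" where
  "bary3 a b c x = (THE (u,v,w). u + v + w = 1 \<and> x = u *\<^sub>R a + v *\<^sub>R b + w *\<^sub>R c)"

definition alpha :: "quad \<Rightarrow> pt \<Rightarrow> real \<times> real \<times> real \<times> real" where
  "alpha Qs x = (case Qs of (Q1,Q2,Q3,Q4) \<Rightarrow>
     if x \<in> convex hull {Q1,Q2,Q3}
     then (case bary3 Q1 Q2 Q3 x of (a1,a2,a3) \<Rightarrow> (a1,a2,a3,0))
     else (case bary3 Q1 Q3 Q4 x of (a1,a3,a4) \<Rightarrow> (a1,0,a3,a4)))"

definition PV :: "quad \<Rightarrow> quad \<Rightarrow> pt \<Rightarrow> pt" where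
  "PV Qs V x = (case alpha Qs x of (a1,a2,a3,a4) \<Rightarrow> (case V of (V1,V2,V3,V4) \<Rightarrow>
      a1 *\<^sub>R V1 + a2 *\<^sub>R V2 + a3 *\<^sub>R V3 + a4 *\<^sub>R V4))"

definition Pquad :: "quad \<Rightarrow> quad \<Rightarrow> quad \<Rightarrow> quad" where
  "Pquad Qs V W = (case W of (R1,R2,R3,R4) \<Rightarrow> (PV Qs V R1, PV Qs V R2, PV Qs V R3, PV Qs V R4))"

definition A1 :: "nat \<Rightarrow> idx set" where
  "A1 m = {(k1,k2,k3,k4). k4 = 0 \<and> k1 + k2 + k3 = m - 1 \<and> k2 \<noteq> 0}"
definition A2 :: "nat \<Rightarrow> idx set" where
  "A2 m = {(k1,k2,k3,k4). k2 = 0 \<and> k1 + k3 + k4 = m - 1 \<and> k4 \<noteq> 0}"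
definition A3 :: "nat \<Rightarrow> idx set" where
  "A3 m = {(k1,k2,k3,k4). k2 = 0 \<and> k4 = 0 \<and> k1 + k3 = m - 1}"
definition Aidx :: "nat \<Rightarrow> idx set" where
  "Aidx m = A1 m \<union> A2 m \<union> A3 m"

definition comb :: "quad \<Rightarrow> nat \<Rightarrow> real \<Rightarrow> real \<Rightarrow> real \<Rightarrow> real \<Rightarrow> pt" where
  "comb Qs m c1 c2 c3 c4 = (case Qs of (Q1,Q2,Q3,Q4) \<Rightarrow>
     (1 / real m) *\<^sub>R (c1 *\<^sub>R Q1 + c2 *\<^sub>R Q2 + c3 *\<^sub>R Q3 + c4 *\<^sub>R Q4))"

text \<open>The quadrilateral S_m(k) (only meaningful for k in A).\<close>
definition Sm :: "quad \<Rightarrow> nat \<Rightarrow> idx \<Rightarrow> quad" where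
  "Sm Qs m k = (case k of (k1,k2,k3,k4) \<Rightarrow>
     let a = real k1; b = real k2; c = real k3; d = real k4 in
     if k \<in> A1 m then
       (comb Qs m (a+1) b c 0, comb Qs m a (b+1) c 0, comb Qs m a b (c+1) 0,
        comb Qs m (a+1) (b-1) (c+1) 0)
     else if k \<in> A2 m then
       (comb Qs m (a+1) 0 c d, comb Qs m (a+1) 0 (c+1) (d-1), comb Qs m a 0 (c+1) d,
        comb Qs m a 0 c (d+1))
     else
       (comb Qs m (a+1) 0 c 0, comb Qs m a 1 c 0, comb Qs m a 0 (c+1) 0,
        comb Qs m a 0 c 1))"

definition Sset :: "quad \<Rightarrow> nat \<Rightarrow> quad set" where
  "Sset Qs m = Sm Qs m ` Aidx m"

definition sides :: "quad \<Rightarrow> pt set set" where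
  "sides W = (case W of (R1,R2,R3,R4) \<Rightarrow>
     {closed_segment R1 R2, closed_segment R2 R3, closed_segment R3 R4, closed_segment R4 R1})"

definition adjacent :: "quad \<Rightarrow> quad \<Rightarrow> bool" where
  "adjacent W W' = (W \<noteq> W' \<and> sides W \<inter> sides W' \<noteq> {})"

definition is_walk :: "('a \<Rightarrow> 'a \<Rightarrow> bool) \<Rightarrow> 'a set \<Rightarrow> 'a list \<Rightarrow> bool" where
  "is_walk E V vs = (vs \<noteq> [] \<and> set vs \<subseteq> V \<and> (\<forall>i. Suc i < length vs \<longrightarrow> E (vs ! i) (vs ! Suc i)))"

definition graph_connected :: "('a \<Rightarrow> 'a \<Rightarrow> bool) \<Rightarrow> 'a set \<Rightarrow> bool" where
  "graph_connected E V = (V \<noteq> {} \<and>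
     (\<forall>u\<in>V. \<forall>v\<in>V. \<exists>vs. is_walk E V vs \<and> hd vs = u \<and> last vs = v))"

definition has_cycle :: "('a \<Rightarrow> 'a \<Rightarrow> bool) \<Rightarrow> 'a set \<Rightarrow> bool" where
  "has_cycle E V = (\<exists>vs. is_walk E V vs \<and> distinct vs \<and> length vs \<ge> 3 \<and> E (last vs) (hd vs))"

definition is_tree :: "('a \<Rightarrow> 'a \<Rightarrow> bool) \<Rightarrow> 'a set \<Rightarrow> bool" where
  "is_tree E V = (graph_connected E V \<and> \<not> has_cycle E V)"

definition labyrinth_set :: "quad \<Rightarrow> nat \<Rightarrow> quad set \<Rightarrow> bool" where
  "labyrinth_set Qs m W1 = (m \<ge> 4 \<and> W1 \<subseteq> Sset Qs m
     \<and> is_tree adjacent W1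
     \<and> (\<exists>!(k1,k2). (k1,k2,0,0) \<in> Aidx m \<and> Sm Qs m (k1,k2,0,0) \<in> W1 \<and> Sm Qs m (0,0,k2,k1) \<in> W1)
     \<and> (\<exists>!(k1,k4). (k1,0,0,k4) \<in> Aidx m \<and> Sm Qs m (k1,0,0,k4) \<in> W1 \<and> Sm Qs m (0,k1,k4,0) \<in> W1)
     \<and> \<not> (Sm Qs m (m-1,0,0,0) \<in> W1 \<and> Sm Qs m (0,0,m-1,0) \<in> W1)
     \<and> \<not> (Sm Qs m (0,m-1,0,0) \<in> W1 \<and> Sm Qs m (0,0,0,m-1) \<in> W1))"

text \<open>W_n for n \<ge> 1 (the value at 0 is an irrelevant placeholder).\<close>
fun Wlev :: "quad \<Rightarrow> quad set \<Rightarrow> nat \<Rightarrow> quad set" where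
  "Wlev Qs W1 0 = {}"
| "Wlev Qs W1 (Suc 0) = W1"
| "Wlev Qs W1 (Suc (Suc n)) = {Pquad Qs W W' | W W'. W' \<in> W1 \<and> W \<in> Wlev Qs W1 (Suc n)}"

definition Llev :: "quad \<Rightarrow> quad set \<Rightarrow> nat \<Rightarrow> pt set" where
  "Llev Qs W1 n = (\<Union>W\<in>Wlev Qs W1 n. region W)"

end

theory Submission
  imports Defs
begin

lemma orient_cyc: "orient a b c = orient b c a"
  by (simp add: orient_def algebra_simps)
lemma orient_comb3:
  assumes "u + v + w = 1"
  shows "orient p q (u *\<^sub>R a + v *\<^sub>R b + w *\<^sub>R c) = u * orient p q a + v * orient p q b + w * orient p q c"
  using assms unfolding orient_def by simp algebra
lemma orient_self1[simp]: "orient a b a = 0" and orient_self2[simp]: "orient a b b = 0"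
  by (simp_all add: orient_def)
lemma bary_identity:
  "orient a b c *\<^sub>R x = orient b c x *\<^sub>R a + orient c a x *\<^sub>R b + orient a b x *\<^sub>R c"
  unfolding vec_eq_iff forall_2 orient_def by simp algebra
lemma bary_sum: "orient b c x + orient c a x + orient a b x = orient a b c"
  unfolding orient_def by (simp add: algebra_simps)

lemma bary3_explicit:
  assumes D: "orient a b c \<noteq> 0"
  shows "bary3 a b c x = (orient b c x / orient a b c, orient c a x / orient a b c, orient a b x / orient a b c)"
proof -
  define D where "D = orient a b c"
  have ex1: "orient b c x / D + orient c a x / D + orient a b x / D = 1"
    using bary_sum[of b c x a] D unfolding D_def by (simp add: add_divide_distrib[symmetric])
  have "x = (1/D) *\<^sub>R (D *\<^sub>R x)" using D unfolding D_def by simp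
  also have "\<dots> = (orient b c x / D) *\<^sub>R a + (orient c a x / D) *\<^sub>R b + (orient a b x / D) *\<^sub>R c"
    unfolding D_def bary_identity[of a b c x] by (simp add: scaleR_add_right)
  finally have ex2: "x = (orient b c x / D) *\<^sub>R a + (orient c a x / D) *\<^sub>R b + (orient a b x / D) *\<^sub>R c" .
  have uniq: "(u,v,w) = (orient b c x / D, orient c a x / D, orient a b x / D)"
    if h: "u + v + w = 1" "x = u *\<^sub>R a + v *\<^sub>R b + w *\<^sub>R c" for u v w
  proof -
    have e: "orient p q x = u * orient p q a + v * orient p q b + w * orient p q c" for p q
      using orient_comb3[OF h(1), of p q a b c] h(2) by simp
    have 1: "orient b c x = u * D" using e[of b c] unfolding D_def using orient_cyc[of a b c] by simp
    have 2: "orient c a x = v * D" using e[of c a] orient_cyc[of a b c] orient_cyc[of b c a] unfolding D_def by simp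
    have 3: "orient a b x = w * D" using e[of a b] unfolding D_def by simp
    show ?thesis using 1 2 3 D unfolding D_def by simp
  qed
  show ?thesis unfolding bary3_def D_def[symmetric]
  proof (rule the_equality)
    show "case (orient b c x / D, orient c a x / D, orient a b x / D) of (u,v,w) \<Rightarrow> u + v + w = 1 \<and> x = u *\<^sub>R a + v *\<^sub>R b + w *\<^sub>R c"
      using ex1 ex2 by simp
    fix p assume "case p of (u,v,w) \<Rightarrow> u + v + w = 1 \<and> x = u *\<^sub>R a + v *\<^sub>R b + w *\<^sub>R c"
    then show "p = (orient b c x / D, orient c a x / D, orient a b x / D)"
      using uniq by (cases p) auto
  qed
qed

lemma orient_swap: "orient a c b = - orient a b c"
  by (simp add: orient_def algebra_simps)

lemma orient_comb2:
  assumes "u + v = 1"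
  shows "orient p q (u *\<^sub>R a + v *\<^sub>R b) = u * orient p q a + v * orient p q b"
  using assms unfolding orient_def by simp algebra

lemma orient_comb4:
  assumes "c1 + c2 + c3 + c4 = 1"
  shows "orient p q (c1 *\<^sub>R a + c2 *\<^sub>R b + c3 *\<^sub>R c + c4 *\<^sub>R d) = c1 * orient p q a + c2 * orient p q b + c3 * orient p q c + c4 * orient p q d"
  using assms unfolding orient_def by simp algebra

lemma bary_repr:
  assumes D: "orient a b c \<noteq> 0"
  shows "x = (orient b c x / orient a b c) *\<^sub>R a + (orient c a x / orient a b c) *\<^sub>R b + (orient a b x / orient a b c) *\<^sub>R c"
    "orient b c x / orient a b c + orient c a x / orient a b c + orient a b x / orient a b c = 1"
proof -
  define D where "D = orient a b c"
  show "orient b c x / orient a b c + orient c a x / orient a b c + orient a b x / orient a b c = 1"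
    using bary_sum[of b c x a] D by (simp add: add_divide_distrib[symmetric])
  have "x = (1/D) *\<^sub>R (D *\<^sub>R x)" using D unfolding D_def by simp
  also have "\<dots> = (orient b c x / D) *\<^sub>R a + (orient c a x / D) *\<^sub>R b + (orient a b x / D) *\<^sub>R c"
    unfolding D_def bary_identity[of a b c x] by (simp add: scaleR_add_right)
  finally show "x = (orient b c x / orient a b c) *\<^sub>R a + (orient c a x / orient a b c) *\<^sub>R b + (orient a b x / orient a b c) *\<^sub>R c"
    unfolding D_def .
qed

lemma bary_coords:
  assumes h: "u + v + w = 1" "x = u *\<^sub>R a + v *\<^sub>R b + w *\<^sub>R c"
  shows "orient b c x = u * orient a b c" "orient c a x = v * orient a b c" "orient a b x = w * orient a b c"
proof -
  have e: "orient p q x = u * orient p q a + v * orient p q b + w * orient p q c" for p q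
    using orient_comb3[OF h(1), of p q a b c] h(2) by simp
  show "orient b c x = u * orient a b c" using e[of b c] orient_cyc[of a b c] by simp
  show "orient c a x = v * orient a b c" using e[of c a] orient_cyc[of a b c] orient_cyc[of b c a] by simp
  show "orient a b x = w * orient a b c" using e[of a b] by simp
qed

lemma bary3_eq:
  assumes D: "orient a b c \<noteq> 0" and h: "u + v + w = 1" "x = u *\<^sub>R a + v *\<^sub>R b + w *\<^sub>R c"
  shows "bary3 a b c x = (u, v, w)"
  using bary3_explicit[OF D, of x] bary_coords[OF h] D by simp

lemma tri_mem:
  assumes D: "orient a b c > 0"
  shows "x \<in> convex hull {a,b,c} \<longleftrightarrow> orient b c x \<ge> 0 \<and> orient c a x \<ge> 0 \<and> orient a b x \<ge> 0"
proof
  assume "x \<in> convex hull {a,b,c}"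
  then obtain u v w where h: "0 \<le> u" "0 \<le> v" "0 \<le> w" "u + v + w = 1" "x = u *\<^sub>R a + v *\<^sub>R b + w *\<^sub>R c"
    unfolding convex_hull_3 by auto
  show "orient b c x \<ge> 0 \<and> orient c a x \<ge> 0 \<and> orient a b x \<ge> 0"
    using bary_coords[OF h(4,5)] h D by simp
next
  assume h: "orient b c x \<ge> 0 \<and> orient c a x \<ge> 0 \<and> orient a b x \<ge> 0"
  have D0: "orient a b c \<noteq> 0" using D by simp
  let ?u = "orient b c x / orient a b c" and ?v = "orient c a x / orient a b c" and ?w = "orient a b x / orient a b c"
  have "0 \<le> ?u \<and> 0 \<le> ?v \<and> 0 \<le> ?w \<and> ?u + ?v + ?w = 1 \<and> x = ?u *\<^sub>R a + ?v *\<^sub>R b + ?w *\<^sub>R c"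
    using bary_repr[OF D0, of x] h D by simp
  then show "x \<in> convex hull {a,b,c}" unfolding convex_hull_3 by blast
qed

lemma convex_orient_ge: "convex {x. orient p q x \<ge> d}"
  unfolding convex_def
proof (intro allI impI ballI, simp)
  fix x y :: pt and u v :: real
  assume "d \<le> orient p q x" "d \<le> orient p q y" "0 \<le> u" "0 \<le> v" "u + v = 1"
  then show "d \<le> orient p q (u *\<^sub>R x + v *\<^sub>R y)"
  proof -
    have "u * d \<le> u * orient p q x" "v * d \<le> v * orient p q y"
      using \<open>d \<le> orient p q x\<close> \<open>d \<le> orient p q y\<close> \<open>0 \<le> u\<close> \<open>0 \<le> v\<close> by (simp_all add: mult_left_mono)
    moreover have "u * d + v * d = d" using \<open>u + v = 1\<close> by (metis distrib_right mult_1)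
    ultimately show ?thesis using orient_comb2[of u v p q x y] \<open>u + v = 1\<close> by linarith
  qed
qed

lemma convex_orient_le: "convex {x. orient p q x \<le> d}"
  unfolding convex_def
proof (intro allI impI ballI, simp)
  fix x y :: pt and u v :: real
  assume "orient p q x \<le> d" "orient p q y \<le> d" "0 \<le> u" "0 \<le> v" "u + v = 1"
  then show "orient p q (u *\<^sub>R x + v *\<^sub>R y) \<le> d"
  proof -
    have "u * orient p q x \<le> u * d" "v * orient p q y \<le> v * d"
      using \<open>orient p q x \<le> d\<close> \<open>orient p q y \<le> d\<close> \<open>0 \<le> u\<close> \<open>0 \<le> v\<close> by (simp_all add: mult_left_mono)
    moreover have "u * d + v * d = d" using \<open>u + v = 1\<close> by (metis distrib_right mult_1)
    ultimately show ?thesis using orient_comb2[of u v p q x y] \<open>u + v = 1\<close> by linarith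
  qed
qed

lemma orient_swap12: "orient b a c = - orient a b c"
  by (simp add: orient_def algebra_simps)

lemma cont_orient: "continuous_on S (\<lambda>x. orient p q x)"
  unfolding orient_def by (intro continuous_intros)

definition coef :: "real \<Rightarrow> real \<Rightarrow> real \<Rightarrow> real \<Rightarrow> bool" where
  "coef c1 c2 c3 c4 \<longleftrightarrow> 0 \<le> c1 \<and> 0 \<le> c2 \<and> 0 \<le> c3 \<and> 0 \<le> c4 \<and> c1 + c2 + c3 + c4 = 1 \<and> (c2 = 0 \<or> c4 = 0)"

definition cpt :: "quad \<Rightarrow> real \<Rightarrow> real \<Rightarrow> real \<Rightarrow> real \<Rightarrow> pt" where
  "cpt V c1 c2 c3 c4 = (case V of (V1,V2,V3,V4) \<Rightarrow> c1 *\<^sub>R V1 + c2 *\<^sub>R V2 + c3 *\<^sub>R V3 + c4 *\<^sub>R V4)"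

locale quadctx =
  fixes Q1 Q2 Q3 Q4 :: pt
  assumes cq: "convex_quad_ccw (Q1,Q2,Q3,Q4)"
begin

lemma o123: "orient Q1 Q2 Q3 > 0" and o234: "orient Q2 Q3 Q4 > 0"
  and o341: "orient Q3 Q4 Q1 > 0" and o412: "orient Q4 Q1 Q2 > 0"
  using cq by (simp_all add: convex_quad_ccw_def)

lemma o134: "orient Q1 Q3 Q4 > 0"
  using o341 orient_cyc[of Q3 Q4 Q1] orient_cyc[of Q4 Q1 Q3] by simp

abbreviation "Qs \<equiv> (Q1,Q2,Q3,Q4)"
abbreviation "QQ \<equiv> convex hull {Q1,Q2,Q3,Q4}"
abbreviation "T1 \<equiv> convex hull {Q1,Q2,Q3}"
abbreviation "T2 \<equiv> convex hull {Q1,Q3,Q4}"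

lemma alpha_lin:
  assumes c: "coef c1 c2 c3 c4"
  shows "alpha Qs (cpt Qs c1 c2 c3 c4) = (c1,c2,c3,c4)"
proof (cases "c4 = 0")
  case True
  let ?x = "cpt Qs c1 c2 c3 c4"
  have x: "?x = c1 *\<^sub>R Q1 + c2 *\<^sub>R Q2 + c3 *\<^sub>R Q3" using True by (simp add: cpt_def)
  have s: "c1 + c2 + c3 = 1" using c True by (simp add: coef_def)
  have "?x \<in> T1" unfolding x convex_hull_3 using c True by (auto simp: coef_def)
  moreover have "bary3 Q1 Q2 Q3 ?x = (c1,c2,c3)" using bary3_eq[OF _ s x] o123 by simp
  ultimately show ?thesis using True by (simp add: alpha_def)
next
  case False
  let ?x = "cpt Qs c1 c2 c3 c4"
  have c2: "c2 = 0" using c False by (simp add: coef_def)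
  have x: "?x = c1 *\<^sub>R Q1 + c3 *\<^sub>R Q3 + c4 *\<^sub>R Q4" using c2 by (simp add: cpt_def)
  have s: "c1 + c3 + c4 = 1" using c c2 by (simp add: coef_def)
  have "orient Q1 Q3 ?x = c4 * orient Q1 Q3 Q4" using bary_coords(3)[OF s x] .
  moreover have "c4 > 0" using c False by (simp add: coef_def)
  ultimately have "orient Q1 Q3 ?x > 0" using o134 by simp
  hence "orient Q3 Q1 ?x < 0" using orient_swap12[of Q3 Q1 ?x] by simp
  hence "?x \<notin> T1" using tri_mem[OF o123] by auto
  moreover have "bary3 Q1 Q3 Q4 ?x = (c1,c3,c4)" using bary3_eq[OF _ s x] o134 by simp
  ultimately show ?thesis using c2 by (simp add: alpha_def)
qed

lemma PV_lin:
  assumes c: "coef c1 c2 c3 c4"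
  shows "PV Qs V (cpt Qs c1 c2 c3 c4) = cpt V c1 c2 c3 c4"
  using alpha_lin[OF c] by (simp add: PV_def cpt_def split: prod.splits)

lemma QQ_halfplanes:
  assumes "x \<in> QQ"
  shows "orient Q1 Q2 x \<ge> 0" "orient Q2 Q3 x \<ge> 0" "orient Q3 Q4 x \<ge> 0" "orient Q4 Q1 x \<ge> 0"
proof -
  have h: "QQ \<subseteq> {x. orient p q x \<ge> 0}" if "orient p q Q1 \<ge> 0" "orient p q Q2 \<ge> 0"
     "orient p q Q3 \<ge> 0" "orient p q Q4 \<ge> 0" for p q
    by (rule hull_minimal) (use that convex_orient_ge in auto)
  have c: "orient a b c = orient c a b" for a b c using orient_cyc[of a b c] orient_cyc[of b c a] by simp
  show "orient Q1 Q2 x \<ge> 0" using h[of Q1 Q2] assms o123 o412 c[of Q1 Q2 Q4] by force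
  show "orient Q2 Q3 x \<ge> 0" using h[of Q2 Q3] assms o234 o123 orient_cyc[of Q1 Q2 Q3] by force
  show "orient Q3 Q4 x \<ge> 0" using h[of Q3 Q4] assms o341 o234 orient_cyc[of Q2 Q3 Q4] by force
  show "orient Q4 Q1 x \<ge> 0" using h[of Q4 Q1] assms o412 o341 orient_cyc[of Q3 Q4 Q1] by force
qed

lemma QQ_split: "x \<in> QQ \<Longrightarrow> x \<in> T1 \<or> x \<in> T2"
  using QQ_halfplanes[of x] tri_mem[OF o123, of x] tri_mem[OF o134, of x] orient_swap12[of Q3 Q1 x]
  by force

lemma T_sub: "T1 \<subseteq> QQ" "T2 \<subseteq> QQ"
   apply (rule hull_mono, blast)
  apply (rule hull_mono, blast)
  done

lemma QQ_eq: "QQ = T1 \<union> T2"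
  using QQ_split T_sub by blast

lemma QQ_coef: "x \<in> QQ \<Longrightarrow> \<exists>c1 c2 c3 c4. coef c1 c2 c3 c4 \<and> x = cpt Qs c1 c2 c3 c4"
proof -
  assume "x \<in> QQ"
  then consider "x \<in> T1" | "x \<in> T2" using QQ_split by blast
  then show ?thesis
  proof cases
    case 1
    then obtain u v w where "0 \<le> u" "0 \<le> v" "0 \<le> w" "u + v + w = 1" "x = u *\<^sub>R Q1 + v *\<^sub>R Q2 + w *\<^sub>R Q3"
      unfolding convex_hull_3 by auto
    then show ?thesis by (intro exI[of _ u] exI[of _ v] exI[of _ w] exI[of _ 0]) (simp add: coef_def cpt_def)
  next
    case 2
    then obtain u v w where "0 \<le> u" "0 \<le> v" "0 \<le> w" "u + v + w = 1" "x = u *\<^sub>R Q1 + v *\<^sub>R Q3 + w *\<^sub>R Q4"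
      unfolding convex_hull_3 by auto
    then show ?thesis by (intro exI[of _ u] exI[of _ 0] exI[of _ v] exI[of _ w]) (simp add: coef_def cpt_def)
  qed
qed

lemma coef_in_hull:
  assumes "coef c1 c2 c3 c4"
  shows "cpt (V1,V2,V3,V4) c1 c2 c3 c4 \<in> convex hull {V1,V2,V3,V4}"
proof (cases "c4 = 0")
  case True
  then have "cpt (V1,V2,V3,V4) c1 c2 c3 c4 \<in> convex hull {V1,V2,V3}"
    using assms unfolding convex_hull_3 by (auto simp: coef_def cpt_def)
  moreover have "convex hull {V1,V2,V3} \<subseteq> convex hull {V1,V2,V3,V4}" by (rule hull_mono) auto
  ultimately show ?thesis by blast
next
  case False
  then have "0 \<le> c1 \<and> 0 \<le> c3 \<and> 0 \<le> c4 \<and> c1 + c3 + c4 = 1 \<and> cpt (V1,V2,V3,V4) c1 c2 c3 c4 = c1 *\<^sub>R V1 + c3 *\<^sub>R V3 + c4 *\<^sub>R V4"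
    using assms by (auto simp: coef_def cpt_def)
  then have "cpt (V1,V2,V3,V4) c1 c2 c3 c4 \<in> convex hull {V1,V3,V4}"
    unfolding convex_hull_3 by blast
  moreover have "convex hull {V1,V3,V4} \<subseteq> convex hull {V1,V2,V3,V4}" by (rule hull_mono) auto
  ultimately show ?thesis by blast
qed

lemma coef_in_QQ: "coef c1 c2 c3 c4 \<Longrightarrow> cpt Qs c1 c2 c3 c4 \<in> QQ"
  using coef_in_hull by blast

lemma PV_in_region:
  assumes "x \<in> QQ"
  shows "PV Qs (V1,V2,V3,V4) x \<in> convex hull {V1,V2,V3,V4}"
  using QQ_coef[OF assms] PV_lin coef_in_hull by metis

lemma PV_T1:
  assumes "x \<in> T1"
  shows "PV Qs V x = (orient Q2 Q3 x / orient Q1 Q2 Q3) *\<^sub>R fst V + (orient Q3 Q1 x / orient Q1 Q2 Q3) *\<^sub>R fst (snd V)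
     + (orient Q1 Q2 x / orient Q1 Q2 Q3) *\<^sub>R fst (snd (snd V))"
proof -
  have D0: "orient Q1 Q2 Q3 \<noteq> 0" using o123 by simp
  let ?u = "orient Q2 Q3 x / orient Q1 Q2 Q3" and ?v = "orient Q3 Q1 x / orient Q1 Q2 Q3" and ?w = "orient Q1 Q2 x / orient Q1 Q2 Q3"
  have c: "coef ?u ?v ?w 0" using tri_mem[OF o123, of x] assms bary_repr(2)[OF D0, of x] o123
    by (simp add: coef_def)
  have "x = cpt Qs ?u ?v ?w 0" using bary_repr(1)[OF D0, of x] by (simp add: cpt_def)
  then have "PV Qs V x = cpt V ?u ?v ?w 0" using PV_lin[OF c] by simp
  then show ?thesis by (simp add: cpt_def split: prod.splits)
qed

lemma PV_T2:
  assumes "x \<in> T2"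
  shows "PV Qs V x = (orient Q3 Q4 x / orient Q1 Q3 Q4) *\<^sub>R fst V + (orient Q4 Q1 x / orient Q1 Q3 Q4) *\<^sub>R fst (snd (snd V))
     + (orient Q1 Q3 x / orient Q1 Q3 Q4) *\<^sub>R snd (snd (snd V))"
proof -
  have D0: "orient Q1 Q3 Q4 \<noteq> 0" using o134 by simp
  let ?u = "orient Q3 Q4 x / orient Q1 Q3 Q4" and ?v = "orient Q4 Q1 x / orient Q1 Q3 Q4" and ?w = "orient Q1 Q3 x / orient Q1 Q3 Q4"
  have c: "coef ?u 0 ?v ?w" using tri_mem[OF o134, of x] assms bary_repr(2)[OF D0, of x] o134
    by (simp add: coef_def)
  have "x = cpt Qs ?u 0 ?v ?w" using bary_repr(1)[OF D0, of x] by (simp add: cpt_def)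
  then have "PV Qs V x = cpt V ?u 0 ?v ?w" using PV_lin[OF c] by simp
  then show ?thesis by (simp add: cpt_def split: prod.splits)
qed

lemma PV_cont: "continuous_on QQ (PV Qs V)"
proof -
  have c1: "continuous_on T1 (PV Qs V)"
    apply (rule continuous_on_eq[OF _ PV_T1[symmetric]])
    apply (intro continuous_intros cont_orient) using o123 by auto
  have c2: "continuous_on T2 (PV Qs V)"
    apply (rule continuous_on_eq[OF _ PV_T2[symmetric]])
    apply (intro continuous_intros cont_orient) using o134 by auto
  have "continuous_on (T1 \<union> T2) (PV Qs V)"
    by (rule continuous_on_closed_Un[OF _ _ c1 c2];
        rule compact_imp_closed; rule compact_convex_hull; rule finite_imp_compact; simp)
  then show ?thesis using QQ_eq by simp
qed

end

definition gpt :: "quad \<Rightarrow> nat \<Rightarrow> nat \<Rightarrow> nat \<Rightarrow> pt" where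
  "gpt V m x y = (if y \<le> x then comb V m (real m - real x) (real x - real y) (real y) 0
                  else comb V m (real m - real y) 0 (real x) (real y - real x))"

definition cellq :: "quad \<Rightarrow> nat \<Rightarrow> nat \<times> nat \<Rightarrow> quad" where
  "cellq V m p = (case p of (x,y) \<Rightarrow> (gpt V m x y, gpt V m (x+1) y, gpt V m (x+1) (y+1), gpt V m x (y+1)))"

definition ll :: "idx \<Rightarrow> nat \<times> nat" where
  "ll k = (case k of (k1,k2,k3,k4) \<Rightarrow> (k2+k3, k3+k4))"

lemma comb_cpt: "comb V m c1 c2 c3 c4 = cpt V (c1/m) (c2/m) (c3/m) (c4/m)"
  by (simp add: comb_def cpt_def split: prod.splits) (simp add: scaleR_add_right divide_inverse_commute)

lemma gpt_cpt:
  assumes "x \<le> m" "y \<le> m" "m > 0"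
  shows "\<exists>c1 c2 c3 c4. coef c1 c2 c3 c4 \<and> (\<forall>V. gpt V m x y = cpt V c1 c2 c3 c4)"
proof (cases "y \<le> x")
  case True
  show ?thesis
    apply (rule exI[of _ "(real m - real x)/m"], rule exI[of _ "(real x - real y)/m"], rule exI[of _ "real y/m"], rule exI[of _ 0])
    using True assms by (auto simp: coef_def gpt_def comb_cpt add_divide_distrib[symmetric])
next
  case False
  show ?thesis
    apply (rule exI[of _ "(real m - real y)/m"], rule exI[of _ 0], rule exI[of _ "real x/m"], rule exI[of _ "(real y - real x)/m"])
    using False assms by (auto simp: coef_def gpt_def comb_cpt add_divide_distrib[symmetric])
qed

lemma Sm_cell:
  assumes "k \<in> Aidx m" "m > 0"
  shows "Sm V m k = cellq V m (ll k)"
proof -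
  obtain k1 k2 k3 k4 where k: "k = (k1,k2,k3,k4)" by (cases k) auto
  consider (a1) "k \<in> A1 m" | (a2) "k \<notin> A1 m" "k \<in> A2 m" | (a3) "k \<notin> A1 m" "k \<notin> A2 m" "k \<in> A3 m"
    using assms(1) unfolding Aidx_def by blast
  then show ?thesis
  proof cases
    case a1
    then have h: "k4 = 0" "k1 + k2 + k3 = m - 1" "k2 \<noteq> 0" using k by (auto simp: A1_def)
    then have n: "k1 + k2 + k3 + 1 = m" using assms(2) by simp
    have r: "real m = real k1 + real k2 + real k3 + 1" using arg_cong[OF n, of real] by simp
    show ?thesis using a1 h r unfolding k Sm_def cellq_def ll_def gpt_def
      by (simp add: Let_def of_nat_diff algebra_simps)
  next
    case a2
    then have h: "k2 = 0" "k1 + k3 + k4 = m - 1" "k4 \<noteq> 0" using k by (auto simp: A2_def)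
    then have n: "k1 + k3 + k4 + 1 = m" using assms(2) by simp
    have r: "real m = real k1 + real k3 + real k4 + 1" using arg_cong[OF n, of real] by simp
    show ?thesis using a2 h r unfolding k Sm_def cellq_def ll_def gpt_def
      by (cases "k4 = 1") (simp_all add: Let_def of_nat_diff algebra_simps)
  next
    case a3
    then have h: "k2 = 0" "k1 + k3 = m - 1" "k4 = 0" using k by (auto simp: A3_def)
    then have n: "k1 + k3 + 1 = m" using assms(2) by simp
    have r: "real m = real k1 + real k3 + 1" using arg_cong[OF n, of real] by simp
    show ?thesis using a3 h r unfolding k Sm_def cellq_def ll_def gpt_def
      by (simp add: Let_def of_nat_diff algebra_simps)
  qed
qed

definition Vsq :: quad where
  "Vsq = (vector [0,0], vector [1,0], vector [1,1], vector [0,1])"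

lemma cpt_Vsq: "(cpt Vsq c1 c2 c3 c4) $ 1 = c2 + c3" "(cpt Vsq c1 c2 c3 c4) $ 2 = c3 + c4"
  by (simp_all add: cpt_def Vsq_def)

lemma gpt_Vsq:
  assumes "m > 0"
  shows "gpt Vsq m x y $ 1 = real x / m" "gpt Vsq m x y $ 2 = real y / m"
  using assms by (auto simp: gpt_def comb_cpt cpt_Vsq add_divide_distrib[symmetric])

context quadctx begin

lemma PV_gpt:
  assumes "x \<le> m" "y \<le> m" "m > 0"
  shows "PV Qs V (gpt Qs m x y) = gpt V m x y"
  using gpt_cpt[OF assms] PV_lin by metis

lemma gpt_QQ:
  assumes "x \<le> m" "y \<le> m" "m > 0"
  shows "gpt Qs m x y \<in> QQ"
  using gpt_cpt[OF assms] coef_in_QQ by metis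

lemma gpt_inj:
  assumes "x \<le> m" "y \<le> m" "x' \<le> m" "y' \<le> m" "m > 0" "gpt Qs m x y = gpt Qs m x' y'"
  shows "x = x' \<and> y = y'"
proof -
  have "gpt Vsq m x y = gpt Vsq m x' y'"
    using PV_gpt[of x m y Vsq] PV_gpt[of x' m y' Vsq] assms by metis
  then have "real x / m = real x' / m" "real y / m = real y' / m"
    using gpt_Vsq[OF assms(5)] by metis+
  then show ?thesis using assms(5) by (simp add: divide_cancel_right)
qed

lemma Pquad_cell:
  assumes "x + 1 \<le> m" "y + 1 \<le> m"
  shows "Pquad Qs V (cellq Qs m (x,y)) = cellq V m (x,y)"
  using assms by (simp add: Pquad_def cellq_def PV_gpt)

lemma ll_range:
  assumes "k \<in> Aidx m" "m > 0"
  shows "fst (ll k) + 1 \<le> m" "snd (ll k) + 1 \<le> m"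
  using assms by (auto simp: Aidx_def A1_def A2_def A3_def ll_def)

lemma Pquad_Sm:
  assumes "k \<in> Aidx m" "m > 0"
  shows "Pquad Qs V (Sm Qs m k) = Sm V m k"
  using Pquad_cell[OF ll_range[OF assms]] Sm_cell[OF assms] by (cases "ll k") auto

lemma h_inj:
  assumes "x \<in> QQ" "y \<in> QQ" "PV Qs Vsq x = PV Qs Vsq y"
  shows "x = y"
proof -
  obtain c1 c2 c3 c4 where c: "coef c1 c2 c3 c4" "x = cpt Qs c1 c2 c3 c4" using QQ_coef[OF assms(1)] by blast
  obtain d1 d2 d3 d4 where d: "coef d1 d2 d3 d4" "y = cpt Qs d1 d2 d3 d4" using QQ_coef[OF assms(2)] by blast
  have "cpt Vsq c1 c2 c3 c4 = cpt Vsq d1 d2 d3 d4" using assms(3) c d PV_lin by metis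
  then have e: "c2 + c3 = d2 + d3" "c3 + c4 = d3 + d4" using cpt_Vsq by metis+
  have "c1 = d1 \<and> c2 = d2 \<and> c3 = d3 \<and> c4 = d4" using c(1) d(1) e unfolding coef_def by linarith
  then show ?thesis using c d by simp
qed

lemma h_box:
  assumes "x \<in> QQ"
  shows "PV Qs Vsq x \<in> cbox 0 1"
proof -
  obtain c1 c2 c3 c4 where c: "coef c1 c2 c3 c4" "x = cpt Qs c1 c2 c3 c4" using QQ_coef[OF assms(1)] by blast
  then have "PV Qs Vsq x = cpt Vsq c1 c2 c3 c4" using PV_lin by metis
  moreover have "0 \<le> c2 + c3 \<and> c2 + c3 \<le> 1 \<and> 0 \<le> c3 + c4 \<and> c3 + c4 \<le> 1" using c(1) unfolding coef_def by linarith
  ultimately show ?thesis unfolding mem_box_cart using cpt_Vsq by (auto simp: forall_2)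
qed

lemma h_val:
  assumes "coef c1 c2 c3 c4"
  shows "PV Qs Vsq (cpt Qs c1 c2 c3 c4) $ 1 = c2 + c3" "PV Qs Vsq (cpt Qs c1 c2 c3 c4) $ 2 = c3 + c4"
  using PV_lin[OF assms] cpt_Vsq by metis+

end

definition q1 :: "quad \<Rightarrow> pt" where "q1 X = fst X"
definition q2 :: "quad \<Rightarrow> pt" where "q2 X = fst (snd X)"
definition q3 :: "quad \<Rightarrow> pt" where "q3 X = fst (snd (snd X))"
definition q4 :: "quad \<Rightarrow> pt" where "q4 X = snd (snd (snd X))"

definition vertq :: "quad \<Rightarrow> quad \<Rightarrow> bool" where "vertq X Y \<longleftrightarrow> q3 X = q2 Y \<and> q4 X = q1 Y"
definition horq :: "quad \<Rightarrow> quad \<Rightarrow> bool" where "horq X Y \<longleftrightarrow> q2 X = q1 Y \<and> q3 X = q4 Y"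
definition EE :: "quad \<Rightarrow> quad \<Rightarrow> bool" where "EE X Y \<longleftrightarrow> vertq X Y \<or> vertq Y X \<or> horq X Y \<or> horq Y X"

lemma EE_sym: "EE X Y \<Longrightarrow> EE Y X" by (auto simp: EE_def)

context quadctx begin

lemma gpt_eq_iff:
  "x \<le> m \<Longrightarrow> y \<le> m \<Longrightarrow> x' \<le> m \<Longrightarrow> y' \<le> m \<Longrightarrow> m > 0 \<Longrightarrow> gpt Qs m x y = gpt Qs m x' y' \<longleftrightarrow> x = x' \<and> y = y'"
  using gpt_inj by blast

lemma cell_adj:
  assumes "x + 1 \<le> m" "y + 1 \<le> m" "x' + 1 \<le> m" "y' + 1 \<le> m" "m > 0"
    and "adjacent (cellq Qs m (x,y)) (cellq Qs m (x',y'))"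
  shows "EE (cellq Qs m (x,y)) (cellq Qs m (x',y'))"
  using assms unfolding adjacent_def sides_def cellq_def EE_def vertq_def horq_def q1_def q2_def q3_def q4_def
  by (auto simp: doubleton_eq_iff gpt_eq_iff)

end

definition bot :: "real \<Rightarrow> quad \<Rightarrow> pt" where "bot u X = (1-u) *\<^sub>R q1 X + u *\<^sub>R q2 X"
definition top :: "real \<Rightarrow> quad \<Rightarrow> pt" where "top u X = (1-u) *\<^sub>R q4 X + u *\<^sub>R q3 X"
definition lft :: "real \<Rightarrow> quad \<Rightarrow> pt" where "lft u X = (1-u) *\<^sub>R q1 X + u *\<^sub>R q4 X"
definition rgt :: "real \<Rightarrow> quad \<Rightarrow> pt" where "rgt u X = (1-u) *\<^sub>R q2 X + u *\<^sub>R q3 X"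

lemma gpt_bot: "gpt V m x 0 = (1/m) *\<^sub>R ((real m - real x) *\<^sub>R q1 V + real x *\<^sub>R q2 V)"
  by (simp add: gpt_def comb_def q1_def q2_def split: prod.splits)

lemma gpt_top: "x \<le> m \<Longrightarrow> gpt V m x m = (1/m) *\<^sub>R ((real m - real x) *\<^sub>R q4 V + real x *\<^sub>R q3 V)"
  by (cases "x = m") (auto simp: gpt_def comb_def q3_def q4_def split: prod.splits)

lemma gpt_lft: "gpt V m 0 y = (1/m) *\<^sub>R ((real m - real y) *\<^sub>R q1 V + real y *\<^sub>R q4 V)"
  by (cases "y = 0") (auto simp: gpt_def comb_def q1_def q4_def split: prod.splits)

lemma gpt_rgt: "y \<le> m \<Longrightarrow> gpt V m m y = (1/m) *\<^sub>R ((real m - real y) *\<^sub>R q2 V + real y *\<^sub>R q3 V)"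
  by (auto simp: gpt_def comb_def q2_def q3_def split: prod.splits)

lemma mouth:
  fixes A B :: pt
  assumes "k + 1 \<le> m" "m \<ge> 2" "u = real k / (real m - 1)"
  shows "(1-u) *\<^sub>R ((1/m) *\<^sub>R ((real m - real k) *\<^sub>R A + real k *\<^sub>R B))
       + u *\<^sub>R ((1/m) *\<^sub>R ((real m - real (k+1)) *\<^sub>R A + real (k+1) *\<^sub>R B)) = (1-u) *\<^sub>R A + u *\<^sub>R B"
proof -
  have m1: "real m - 1 > 0" using assms(2) by simp
  have L: "(1-u) *\<^sub>R ((1/m) *\<^sub>R ((real m - real k) *\<^sub>R A + real k *\<^sub>R B))
       + u *\<^sub>R ((1/m) *\<^sub>R ((real m - real (k+1)) *\<^sub>R A + real (k+1) *\<^sub>R B))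
     = (((1-u) * (real m - real k) + u * (real m - real (k+1))) / m) *\<^sub>R A
       + (((1-u) * real k + u * real (k+1)) / m) *\<^sub>R B"
    by (simp add: algebra_simps scaleR_add_right scaleR_add_left divide_inverse)
  have a: "((1-u) * (real m - real k) + u * (real m - real (k+1))) / m = 1 - u"
    using m1 assms(2,3) by (simp add: field_simps)
  have b: "((1-u) * real k + u * real (k+1)) / m = u"
    using m1 assms(2,3) by (simp add: field_simps)
  show ?thesis unfolding L a b ..
qed

lemma q_cellq: "q1 (cellq V m (x,y)) = gpt V m x y" "q2 (cellq V m (x,y)) = gpt V m (x+1) y"
  "q3 (cellq V m (x,y)) = gpt V m (x+1) (y+1)" "q4 (cellq V m (x,y)) = gpt V m x (y+1)"
  by (simp_all add: cellq_def q1_def q2_def q3_def q4_def)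

lemma bot_cell:
  assumes "k + 1 \<le> m" "m \<ge> 2" "u = real k / (real m - 1)"
  shows "bot u (cellq V m (k,0)) = bot u V"
  using mouth[OF assms, of "q1 V" "q2 V"] by (simp add: bot_def q_cellq gpt_bot)

lemma top_cell:
  assumes "k + 1 \<le> m" "m \<ge> 2" "u = real k / (real m - 1)"
  shows "top u (cellq V m (k,m-1)) = top u V"
proof -
  have "m - 1 + 1 = m" using assms by simp
  then show ?thesis using mouth[OF assms, of "q4 V" "q3 V"] assms(1)
    by (simp add: top_def q_cellq gpt_top)
qed

lemma lft_cell:
  assumes "k + 1 \<le> m" "m \<ge> 2" "u = real k / (real m - 1)"
  shows "lft u (cellq V m (0,k)) = lft u V"
  using mouth[OF assms, of "q1 V" "q4 V"] by (simp add: lft_def q_cellq gpt_lft)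

lemma rgt_cell:
  assumes "k + 1 \<le> m" "m \<ge> 2" "u = real k / (real m - 1)"
  shows "rgt u (cellq V m (m-1,k)) = rgt u V"
proof -
  have "m - 1 + 1 = m" using assms by simp
  then show ?thesis using mouth[OF assms, of "q2 V" "q3 V"] assms(1)
    by (simp add: rgt_def q_cellq gpt_rgt)
qed

lemma vert_cell:
  assumes "vertq W Y" "k + 1 \<le> m" "m \<ge> 2"
  shows "vertq (cellq W m (k, m-1)) (cellq Y m (k, 0))"
proof -
  have "m - 1 + 1 = m" using assms by simp
  then show ?thesis using assms unfolding vertq_def
    by (simp add: q_cellq gpt_top gpt_bot)
qed

lemma hor_cell:
  assumes "horq W Y" "k + 1 \<le> m" "m \<ge> 2"
  shows "horq (cellq W m (m-1, k)) (cellq Y m (0, k))"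
proof -
  have "m - 1 + 1 = m" using assms by simp
  then show ?thesis using assms unfolding horq_def
    by (simp add: q_cellq gpt_lft gpt_rgt)
qed

lemma EE_Pquad:
  assumes "EE X Y"
  shows "EE (Pquad Qs W X) (Pquad Qs W Y)"
  using assms unfolding EE_def vertq_def horq_def q1_def q2_def q3_def q4_def Pquad_def
  by (auto split: prod.splits)

context quadctx begin

lemma mouth_PV:
  assumes "0 \<le> u" "u \<le> 1"
  shows "bot u V = PV Qs V (bot u Qs)" "top u V = PV Qs V (top u Qs)"
    "lft u V = PV Qs V (lft u Qs)" "rgt u V = PV Qs V (rgt u Qs)"
    "bot u Qs \<in> QQ" "top u Qs \<in> QQ" "lft u Qs \<in> QQ" "rgt u Qs \<in> QQ"
proof -
  have c: "coef (1-u) u 0 0" "coef 0 0 u (1-u)" "coef (1-u) 0 0 u" "coef 0 (1-u) u 0"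
    using assms by (auto simp: coef_def)
  have e: "bot u Qs = cpt Qs (1-u) u 0 0" "top u Qs = cpt Qs 0 0 u (1-u)"
    "lft u Qs = cpt Qs (1-u) 0 0 u" "rgt u Qs = cpt Qs 0 (1-u) u 0"
    by (auto simp: bot_def top_def lft_def rgt_def cpt_def q1_def q2_def q3_def q4_def)
  have e2: "bot u V = cpt V (1-u) u 0 0" "top u V = cpt V 0 0 u (1-u)"
    "lft u V = cpt V (1-u) 0 0 u" "rgt u V = cpt V 0 (1-u) u 0"
    by (auto simp: bot_def top_def lft_def rgt_def cpt_def q1_def q2_def q3_def q4_def split: prod.splits)
  show "bot u V = PV Qs V (bot u Qs)" "top u V = PV Qs V (top u Qs)"
    "lft u V = PV Qs V (lft u Qs)" "rgt u V = PV Qs V (rgt u Qs)"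
    using PV_lin c e e2 by metis+
  show "bot u Qs \<in> QQ" "top u Qs \<in> QQ" "lft u Qs \<in> QQ" "rgt u Qs \<in> QQ"
    using coef_in_QQ c e by metis+
qed

end

definition Er :: "quad set \<Rightarrow> quad \<Rightarrow> quad \<Rightarrow> bool" where
  "Er S X Y \<longleftrightarrow> X \<in> S \<and> Y \<in> S \<and> EE X Y"

definition nextlev :: "quad \<Rightarrow> quad set \<Rightarrow> quad set \<Rightarrow> quad set" where
  "nextlev Qs W1 S = {Pquad Qs W W' | W W'. W' \<in> W1 \<and> W \<in> S}"

lemma Wlev_Suc: "Wlev Qs W1 (Suc (Suc n)) = nextlev Qs W1 (Wlev Qs W1 (Suc n))"
  by (simp add: nextlev_def)

locale lab = quadctx +
  fixes m :: nat and W1 :: "quad set" and k1 k2 j1 j4 :: nat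
  assumes m4: "m \<ge> 4"
    and W1sub: "W1 \<subseteq> Sm Qs m ` Aidx m"
    and W1conn: "\<forall>X\<in>W1. \<forall>Y\<in>W1. (Er W1)\<^sup>*\<^sup>* X Y"
    and kk: "k1 + k2 = m - 1" and exb: "Sm Qs m (k1,k2,0,0) \<in> W1" and ext: "Sm Qs m (0,0,k2,k1) \<in> W1"
    and jj: "j1 + j4 = m - 1" and exl: "Sm Qs m (j1,0,0,j4) \<in> W1" and exr: "Sm Qs m (0,j1,j4,0) \<in> W1"
begin

definition "u = real k2 / (real m - 1)"
definition "v = real j4 / (real m - 1)"

lemma m0: "m > 0" and m2: "m \<ge> 2" using m4 by auto

lemma uv_range: "0 \<le> u" "u \<le> 1" "0 \<le> v" "v \<le> 1"
proof -
  have "real k2 \<le> real m - 1" "real j4 \<le> real m - 1" using kk jj m4 by linarith+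
  moreover have "real m - 1 > 0" using m4 by simp
  ultimately show "0 \<le> u" "u \<le> 1" "0 \<le> v" "v \<le> 1" by (auto simp: u_def v_def)
qed

lemma ex_idx: "(k1,k2,0,0) \<in> Aidx m" "(0,0,k2,k1) \<in> Aidx m" "(j1,0,0,j4) \<in> Aidx m" "(0,j1,j4,0) \<in> Aidx m"
  using kk jj by (auto simp: Aidx_def A1_def A2_def A3_def)

lemma ex_cells: "Sm V m (k1,k2,0,0) = cellq V m (k2,0)" "Sm V m (0,0,k2,k1) = cellq V m (k2,m-1)"
  "Sm V m (j1,0,0,j4) = cellq V m (0,j4)" "Sm V m (0,j1,j4,0) = cellq V m (m-1,j4)"
proof -
  have "k2 + k1 = m - 1" using kk by simp
  then show "Sm V m (k1,k2,0,0) = cellq V m (k2,0)" "Sm V m (0,0,k2,k1) = cellq V m (k2,m-1)"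
  "Sm V m (j1,0,0,j4) = cellq V m (0,j4)" "Sm V m (0,j1,j4,0) = cellq V m (m-1,j4)"
  using Sm_cell[OF ex_idx(1) m0] Sm_cell[OF ex_idx(2) m0] Sm_cell[OF ex_idx(3) m0] Sm_cell[OF ex_idx(4) m0]
    jj by (simp_all add: ll_def)
qed

lemma k2m: "k2 + 1 \<le> m" and j4m: "j4 + 1 \<le> m" using kk jj m4 by auto

lemma W1_Pquad: "X \<in> W1 \<Longrightarrow> \<exists>k\<in>Aidx m. X = Sm Qs m k \<and> (\<forall>W. Pquad Qs W X = Sm W m k)"
  using W1sub Pquad_Sm m0 by blast

definition Inv :: "quad set \<Rightarrow> bool" where
  "Inv S \<longleftrightarrow> (\<forall>X\<in>S. \<forall>Y\<in>S. (Er S)\<^sup>*\<^sup>* X Y) \<and> (\<exists>X\<in>S. bot u X = bot u Qs) \<and> (\<exists>X\<in>S. top u X = top u Qs)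
     \<and> (\<exists>X\<in>S. lft v X = lft v Qs) \<and> (\<exists>X\<in>S. rgt v X = rgt v Qs)"

lemma Inv_W1: "Inv W1"
proof -
  have "bot u (Sm Qs m (k1,k2,0,0)) = bot u Qs" unfolding ex_cells by (rule bot_cell[OF k2m m2 u_def])
  moreover have "top u (Sm Qs m (0,0,k2,k1)) = top u Qs" unfolding ex_cells by (rule top_cell[OF k2m m2 u_def])
  moreover have "lft v (Sm Qs m (j1,0,0,j4)) = lft v Qs" unfolding ex_cells by (rule lft_cell[OF j4m m2 v_def])
  moreover have "rgt v (Sm Qs m (0,j1,j4,0)) = rgt v Qs" unfolding ex_cells by (rule rgt_cell[OF j4m m2 v_def])
  ultimately show ?thesis unfolding Inv_def using W1conn exb ext exl exr by blast
qed

lemma lift: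
  assumes "W \<in> S" "(Er W1)\<^sup>*\<^sup>* A B"
  shows "(Er (nextlev Qs W1 S))\<^sup>*\<^sup>* (Pquad Qs W A) (Pquad Qs W B)"
  using assms(2)
proof (induction rule: rtranclp_induct)
  case base then show ?case by simp
next
  case (step B C)
  then have "Er (nextlev Qs W1 S) (Pquad Qs W B) (Pquad Qs W C)"
    using assms(1) EE_Pquad unfolding Er_def nextlev_def by blast
  then show ?case using step by simp
qed

lemma Inv_next:
  assumes I: "Inv S"
  shows "Inv (nextlev Qs W1 S)"
proof -
  let ?N = "nextlev Qs W1 S"
  have mem: "W \<in> S \<Longrightarrow> A \<in> W1 \<Longrightarrow> Pquad Qs W A \<in> ?N" for W A unfolding nextlev_def by blast
  have main: "(Er S)\<^sup>*\<^sup>* W Y \<Longrightarrow> W \<in> S \<Longrightarrow> \<forall>A\<in>W1. \<forall>B\<in>W1. (Er ?N)\<^sup>*\<^sup>* (Pquad Qs W A) (Pquad Qs Y B)" for W Y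
  proof (induction rule: rtranclp_induct)
    case base
    then show ?case using lift W1conn by blast
  next
    case (step Z Y)
    have ZY: "Z \<in> S" "Y \<in> S" "EE Z Y" using step(2) unfolding Er_def by auto
    have pz: "Pquad Qs Z (Sm Qs m k) = Sm Z m k" "Pquad Qs Y (Sm Qs m k) = Sm Y m k" if "k \<in> Aidx m" for k
      using Pquad_Sm[OF that m0] by auto
    have edge: "\<exists>A\<in>W1. \<exists>B\<in>W1. Er ?N (Pquad Qs Z A) (Pquad Qs Y B)"
    proof -
      have "vertq Z Y \<or> vertq Y Z \<or> horq Z Y \<or> horq Y Z" using ZY(3) unfolding EE_def .
      moreover have c: "Pquad Qs Z (Sm Qs m (0,0,k2,k1)) = cellq Z m (k2,m-1)"
        "Pquad Qs Y (Sm Qs m (k1,k2,0,0)) = cellq Y m (k2,0)"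
        "Pquad Qs Z (Sm Qs m (k1,k2,0,0)) = cellq Z m (k2,0)"
        "Pquad Qs Y (Sm Qs m (0,0,k2,k1)) = cellq Y m (k2,m-1)"
        "Pquad Qs Z (Sm Qs m (0,j1,j4,0)) = cellq Z m (m-1,j4)"
        "Pquad Qs Y (Sm Qs m (j1,0,0,j4)) = cellq Y m (0,j4)"
        "Pquad Qs Z (Sm Qs m (j1,0,0,j4)) = cellq Z m (0,j4)"
        "Pquad Qs Y (Sm Qs m (0,j1,j4,0)) = cellq Y m (m-1,j4)"
        using pz[OF ex_idx(1)] pz[OF ex_idx(2)] pz[OF ex_idx(3)] pz[OF ex_idx(4)]
          ex_cells[of Z] ex_cells[of Y] by simp_all
      ultimately have "EE (Pquad Qs Z (Sm Qs m (0,0,k2,k1))) (Pquad Qs Y (Sm Qs m (k1,k2,0,0)))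
          \<or> EE (Pquad Qs Z (Sm Qs m (k1,k2,0,0))) (Pquad Qs Y (Sm Qs m (0,0,k2,k1)))
          \<or> EE (Pquad Qs Z (Sm Qs m (0,j1,j4,0))) (Pquad Qs Y (Sm Qs m (j1,0,0,j4)))
          \<or> EE (Pquad Qs Z (Sm Qs m (j1,0,0,j4))) (Pquad Qs Y (Sm Qs m (0,j1,j4,0)))"
        unfolding c using vert_cell[OF _ k2m m2, of Z Y] vert_cell[OF _ k2m m2, of Y Z]
          hor_cell[OF _ j4m m2, of Z Y] hor_cell[OF _ j4m m2, of Y Z] unfolding EE_def by blast
      then show ?thesis unfolding Er_def using mem[OF ZY(1)] mem[OF ZY(2)] exb ext exl exr by blast
    qed
    then obtain A0 B0 where AB: "A0 \<in> W1" "B0 \<in> W1" "Er ?N (Pquad Qs Z A0) (Pquad Qs Y B0)" by blast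
    show ?case
    proof (intro ballI)
      fix A B assume "A \<in> W1" "B \<in> W1"
      have "(Er ?N)\<^sup>*\<^sup>* (Pquad Qs W A) (Pquad Qs Z A0)" using step.IH[OF step.prems] \<open>A \<in> W1\<close> AB(1) by blast
      also have "(Er ?N) (Pquad Qs Z A0) (Pquad Qs Y B0)" using AB(3) .
      also have "(Er ?N)\<^sup>*\<^sup>* (Pquad Qs Y B0) (Pquad Qs Y B)" using lift[OF ZY(2)] W1conn AB(2) \<open>B \<in> W1\<close> by blast
      finally show "(Er ?N)\<^sup>*\<^sup>* (Pquad Qs W A) (Pquad Qs Y B)" .
    qed
  qed
  have conn: "\<forall>X\<in>?N. \<forall>Y\<in>?N. (Er ?N)\<^sup>*\<^sup>* X Y"
  proof (intro ballI)
    fix X Y assume "X \<in> ?N" "Y \<in> ?N"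
    then obtain W A Z B where "X = Pquad Qs W A" "A \<in> W1" "W \<in> S" "Y = Pquad Qs Z B" "B \<in> W1" "Z \<in> S"
      unfolding nextlev_def by blast
    then show "(Er ?N)\<^sup>*\<^sup>* X Y" using main I unfolding Inv_def by blast
  qed
  obtain Xb where Xb: "Xb \<in> S" "bot u Xb = bot u Qs" using I unfolding Inv_def by blast
  obtain Xt where Xt: "Xt \<in> S" "top u Xt = top u Qs" using I unfolding Inv_def by blast
  obtain Xl where Xl: "Xl \<in> S" "lft v Xl = lft v Qs" using I unfolding Inv_def by blast
  obtain Xr where Xr: "Xr \<in> S" "rgt v Xr = rgt v Qs" using I unfolding Inv_def by blast
  have "Pquad Qs Xb (Sm Qs m (k1,k2,0,0)) \<in> ?N" "bot u (Pquad Qs Xb (Sm Qs m (k1,k2,0,0))) = bot u Qs"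
  proof -
    have "Pquad Qs Xb (Sm Qs m (k1,k2,0,0)) = cellq Xb m (k2,0)" using Pquad_Sm[OF ex_idx(1) m0, of Xb] ex_cells(1)[of Xb] by simp
    then show "Pquad Qs Xb (Sm Qs m (k1,k2,0,0)) \<in> ?N" "bot u (Pquad Qs Xb (Sm Qs m (k1,k2,0,0))) = bot u Qs"
      using mem[OF Xb(1) exb] Xb(2) bot_cell[OF k2m m2 u_def, of Xb] by auto
  qed
  moreover have "Pquad Qs Xt (Sm Qs m (0,0,k2,k1)) \<in> ?N" "top u (Pquad Qs Xt (Sm Qs m (0,0,k2,k1))) = top u Qs"
  proof -
    have "Pquad Qs Xt (Sm Qs m (0,0,k2,k1)) = cellq Xt m (k2,m-1)" using Pquad_Sm[OF ex_idx(2) m0, of Xt] ex_cells(2)[of Xt] by simp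
    then show "Pquad Qs Xt (Sm Qs m (0,0,k2,k1)) \<in> ?N" "top u (Pquad Qs Xt (Sm Qs m (0,0,k2,k1))) = top u Qs"
      using mem[OF Xt(1) ext] Xt(2) top_cell[OF k2m m2 u_def, of Xt] by auto
  qed
  moreover have "Pquad Qs Xl (Sm Qs m (j1,0,0,j4)) \<in> ?N" "lft v (Pquad Qs Xl (Sm Qs m (j1,0,0,j4))) = lft v Qs"
  proof -
    have "Pquad Qs Xl (Sm Qs m (j1,0,0,j4)) = cellq Xl m (0,j4)" using Pquad_Sm[OF ex_idx(3) m0, of Xl] ex_cells(3)[of Xl] by simp
    then show "Pquad Qs Xl (Sm Qs m (j1,0,0,j4)) \<in> ?N" "lft v (Pquad Qs Xl (Sm Qs m (j1,0,0,j4))) = lft v Qs"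
      using mem[OF Xl(1) exl] Xl(2) lft_cell[OF j4m m2 v_def, of Xl] by auto
  qed
  moreover have "Pquad Qs Xr (Sm Qs m (0,j1,j4,0)) \<in> ?N" "rgt v (Pquad Qs Xr (Sm Qs m (0,j1,j4,0))) = rgt v Qs"
  proof -
    have "Pquad Qs Xr (Sm Qs m (0,j1,j4,0)) = cellq Xr m (m-1,j4)" using Pquad_Sm[OF ex_idx(4) m0, of Xr] ex_cells(4)[of Xr] by simp
    then show "Pquad Qs Xr (Sm Qs m (0,j1,j4,0)) \<in> ?N" "rgt v (Pquad Qs Xr (Sm Qs m (0,j1,j4,0))) = rgt v Qs"
      using mem[OF Xr(1) exr] Xr(2) rgt_cell[OF j4m m2 v_def, of Xr] by auto
  qed
  ultimately show ?thesis using conn unfolding Inv_def by blast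
qed

lemma Inv_lev: "Inv (Wlev Qs W1 (Suc n))"
proof (induction n)
  case 0 then show ?case using Inv_W1 by simp
next
  case (Suc n) then show ?case using Inv_next Wlev_Suc by metis
qed

end

lemma pc_union:
  assumes pc: "\<And>X. X \<in> S \<Longrightarrow> path_connected (F X)"
    and conn: "\<forall>X\<in>S. \<forall>Y\<in>S. R\<^sup>*\<^sup>* X Y"
    and R: "\<And>X Y. R X Y \<Longrightarrow> Y \<in> S \<and> F X \<inter> F Y \<noteq> {}"
  shows "path_connected (\<Union>X\<in>S. F X)"
proof -
  let ?U = "\<Union>X\<in>S. F X"
  have claim: "R\<^sup>*\<^sup>* X Y \<Longrightarrow> X \<in> S \<Longrightarrow> x \<in> F X \<Longrightarrow> \<forall>y\<in>F Y. path_component ?U x y" for X Y x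
  proof (induction rule: rtranclp_induct)
    case base
    then show ?case using pc[OF base(1)] path_connected_component path_component_of_subset
      by (metis (no_types, lifting) UN_upper)
  next
    case (step Z Y)
    obtain z where z: "z \<in> F Z" "z \<in> F Y" using R[OF step(2)] by blast
    have Y: "Y \<in> S" using R[OF step(2)] by blast
    have "path_component ?U x z" using step z by blast
    moreover have "\<forall>y\<in>F Y. path_component ?U z y"
      using pc[OF Y] z(2) path_connected_component path_component_of_subset Y
      by (metis (no_types, lifting) UN_upper)
    ultimately show ?case using path_component_trans by blast
  qed
  show ?thesis unfolding path_connected_component
  proof (intro ballI)
    fix x y assume "x \<in> ?U" "y \<in> ?U"
    then obtain X Y where "X \<in> S" "x \<in> F X" "Y \<in> S" "y \<in> F Y" by blast
    then show "path_component ?U x y" using claim conn by blast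
  qed
qed

lemma region_cases: "region (V1,V2,V3,V4) = convex hull {V1,V2,V3,V4}"
  by (simp add: region_def)

context quadctx begin

lemma PV_region: "x \<in> QQ \<Longrightarrow> PV Qs W x \<in> region W"
  using PV_in_region by (cases W) (auto simp: region_def)

lemma gpt_in_region:
  assumes "x \<le> m" "y \<le> m" "m > 0"
  shows "gpt W m x y \<in> region W"
proof -
  obtain V1 V2 V3 V4 where W: "W = (V1,V2,V3,V4)" by (cases W) auto
  show ?thesis using gpt_cpt[OF assms] coef_in_hull unfolding W region_def by fastforce
qed

lemma region_cell_sub:
  assumes "x + 1 \<le> m" "y + 1 \<le> m" "m > 0"
  shows "region (cellq W m (x,y)) \<subseteq> region W"
proof -
  have "convex (region W)" by (cases W) (simp add: region_def convex_convex_hull)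
  moreover have "{gpt W m x y, gpt W m (x+1) y, gpt W m (x+1) (y+1), gpt W m x (y+1)} \<subseteq> region W"
    using gpt_in_region assms by simp
  ultimately show ?thesis unfolding cellq_def region_def by (simp add: hull_minimal)
qed

lemma region_Qs: "region Qs = QQ" by (simp add: region_def)

lemma hQ: "PV Qs Vsq Q1 $ 1 = 0" "PV Qs Vsq Q1 $ 2 = 0" "PV Qs Vsq Q2 $ 1 = 1" "PV Qs Vsq Q2 $ 2 = 0"
  "PV Qs Vsq Q3 $ 1 = 1" "PV Qs Vsq Q3 $ 2 = 1" "PV Qs Vsq Q4 $ 1 = 0" "PV Qs Vsq Q4 $ 2 = 1"
proof -
  have c: "coef 1 0 0 0" "coef 0 1 0 0" "coef 0 0 1 0" "coef 0 0 0 1" by (auto simp: coef_def)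
  have e: "Q1 = cpt Qs 1 0 0 0" "Q2 = cpt Qs 0 1 0 0" "Q3 = cpt Qs 0 0 1 0" "Q4 = cpt Qs 0 0 0 1"
    by (simp_all add: cpt_def)
  show "PV Qs Vsq Q1 $ 1 = 0" "PV Qs Vsq Q1 $ 2 = 0" "PV Qs Vsq Q2 $ 1 = 1" "PV Qs Vsq Q2 $ 2 = 0"
  "PV Qs Vsq Q3 $ 1 = 1" "PV Qs Vsq Q3 $ 2 = 1" "PV Qs Vsq Q4 $ 1 = 0" "PV Qs Vsq Q4 $ 2 = 1"
    using h_val[OF c(1)] h_val[OF c(2)] h_val[OF c(3)] h_val[OF c(4)] e by simp_all
qed

lemma hmouth:
  assumes "0 \<le> u" "u \<le> 1"
  shows "PV Qs Vsq (bot u Qs) $ 2 = 0" "PV Qs Vsq (top u Qs) $ 2 = 1"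
    "PV Qs Vsq (lft u Qs) $ 1 = 0" "PV Qs Vsq (rgt u Qs) $ 1 = 1"
proof -
  have c: "coef (1-u) u 0 0" "coef 0 0 u (1-u)" "coef (1-u) 0 0 u" "coef 0 (1-u) u 0"
    using assms by (auto simp: coef_def)
  have e: "bot u Qs = cpt Qs (1-u) u 0 0" "top u Qs = cpt Qs 0 0 u (1-u)"
    "lft u Qs = cpt Qs (1-u) 0 0 u" "rgt u Qs = cpt Qs 0 (1-u) u 0"
    by (auto simp: bot_def top_def lft_def rgt_def cpt_def q1_def q2_def q3_def q4_def)
  show "PV Qs Vsq (bot u Qs) $ 2 = 0" "PV Qs Vsq (top u Qs) $ 2 = 1"
    "PV Qs Vsq (lft u Qs) $ 1 = 0" "PV Qs Vsq (rgt u Qs) $ 1 = 1"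
    using h_val[OF c(1)] h_val[OF c(2)] h_val[OF c(3)] h_val[OF c(4)] e by simp_all
qed

lemma sep_gen:
  assumes L: "C \<subseteq> L" "C \<subseteq> QQ" "path_connected C" "a \<in> C" "b \<in> C"
    and pq: "path_component (QQ - L) p q"
    and dirs: "(PV Qs Vsq p $ 1 = 0 \<and> PV Qs Vsq q $ 1 = 1 \<and> PV Qs Vsq a $ 2 = 0 \<and> PV Qs Vsq b $ 2 = 1)
             \<or> (PV Qs Vsq p $ 2 = 0 \<and> PV Qs Vsq q $ 2 = 1 \<and> PV Qs Vsq a $ 1 = 0 \<and> PV Qs Vsq b $ 1 = 1)"
  shows False
proof -
  let ?h = "PV Qs Vsq"
  obtain g where g: "path g" "path_image g \<subseteq> QQ - L" "pathstart g = p" "pathfinish g = q"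
    using pq unfolding path_component_def by blast
  obtain d where d: "path d" "path_image d \<subseteq> C" "pathstart d = a" "pathfinish d = b"
    using L(3,4,5) unfolding path_connected_def by blast
  have hc: "continuous_on QQ ?h" by (rule PV_cont)
  have pg: "path (?h \<circ> g)" using g(1,2) hc by (intro path_continuous_image continuous_on_subset[OF hc]) auto
  have pd: "path (?h \<circ> d)" using d(1,2) L(2) hc by (intro path_continuous_image continuous_on_subset[OF hc]) auto
  have ig: "path_image (?h \<circ> g) \<subseteq> cbox 0 1" using g(2) h_box by (auto simp: path_image_compose)
  have id: "path_image (?h \<circ> d) \<subseteq> cbox 0 1" using d(2) L(2) h_box by (auto simp: path_image_compose)
  have "\<exists>z. z \<in> path_image (?h \<circ> g) \<and> z \<in> path_image (?h \<circ> d)"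
    using dirs
  proof (elim disjE conjE)
    assume "?h p $ 1 = 0" "?h q $ 1 = 1" "?h a $ 2 = 0" "?h b $ 2 = 1"
    then have "(pathstart (?h \<circ> g))$1 = (0::real^2)$1" "(pathfinish (?h \<circ> g))$1 = (1::real^2)$1"
      "(pathstart (?h \<circ> d))$2 = (0::real^2)$2" "(pathfinish (?h \<circ> d))$2 = (1::real^2)$2"
      using g d by (auto simp: pathstart_compose pathfinish_compose)
    from fashoda[OF pg pd ig id this] show ?thesis by blast
  next
    assume "?h p $ 2 = 0" "?h q $ 2 = 1" "?h a $ 1 = 0" "?h b $ 1 = 1"
    then have "(pathstart (?h \<circ> d))$1 = (0::real^2)$1" "(pathfinish (?h \<circ> d))$1 = (1::real^2)$1"
      "(pathstart (?h \<circ> g))$2 = (0::real^2)$2" "(pathfinish (?h \<circ> g))$2 = (1::real^2)$2"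
      using g d by (auto simp: pathstart_compose pathfinish_compose)
    from fashoda[OF pd pg id ig this] show ?thesis by blast
  qed
  then obtain y1 y2 where y: "y1 \<in> path_image g" "y2 \<in> path_image d" "?h y1 = ?h y2"
    by (auto simp: path_image_compose)
  have "y1 = y2" using h_inj y g(2) d(2) L(2) by blast
  then show False using y g(2) d(2) L(1) by blast
qed

end

lemma key_ineq:
  fixes P N s t mm :: real
  assumes "0 < P" "N \<le> 0" "1 \<le> s" "0 \<le> t" "0 < mm"
  shows "((mm - s) * P + t * N) / mm \<le> (mm - 1) / mm * P"
proof -
  have "(mm - s) * P \<le> (mm - 1) * P" using assms by (intro mult_right_mono) auto
  moreover have "t * N \<le> 0" using assms by (simp add: mult_nonneg_nonpos)
  ultimately have "(mm - s) * P + t * N \<le> (mm - 1) * P" by linarith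
  then show ?thesis using assms(5) by (simp add: divide_right_mono)
qed

context quadctx begin

lemma orient_gpt:
  assumes "a \<le> m" "b \<le> m" "m > 0"
  shows "orient p q (gpt Qs m a b) = (if b \<le> a
     then ((real m - real a) * orient p q Q1 + (real a - real b) * orient p q Q2 + real b * orient p q Q3) / m
     else ((real m - real b) * orient p q Q1 + real a * orient p q Q3 + (real b - real a) * orient p q Q4) / m)"
proof (cases "b \<le> a")
  case True
  have s: "(real m - real a)/m + (real a - real b)/m + real b/m + 0/m = 1" using assms
    by (simp add: add_divide_distrib[symmetric])
  show ?thesis using True orient_comb4[OF s, of p q Q1 Q2 Q3 Q4]
    by (simp add: gpt_def comb_cpt cpt_def add_divide_distrib[symmetric])
next
  case False
  have s: "(real m - real b)/m + 0/m + real a/m + (real b - real a)/m = 1" using assms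
    by (simp add: add_divide_distrib[symmetric])
  show ?thesis using False orient_comb4[OF s, of p q Q1 Q2 Q3 Q4]
    by (simp add: gpt_def comb_cpt cpt_def add_divide_distrib[symmetric] algebra_simps)
qed

lemma oc: "orient a b c = orient c a b" using orient_cyc[of a b c] orient_cyc[of b c a] by simp

lemma corner_vertex:
  assumes "a \<le> m" "b \<le> m" "m > 0"
  shows "(a,b) \<noteq> (0,0) \<Longrightarrow> orient Q2 Q4 (gpt Qs m a b) \<le> (real m - 1) / real m * orient Q2 Q4 Q1"
    and "(a,b) \<noteq> (m,0) \<Longrightarrow> orient Q3 Q1 (gpt Qs m a b) \<le> (real m - 1) / real m * orient Q3 Q1 Q2"
    and "(a,b) \<noteq> (m,m) \<Longrightarrow> orient Q4 Q2 (gpt Qs m a b) \<le> (real m - 1) / real m * orient Q4 Q2 Q3"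
    and "(a,b) \<noteq> (0,m) \<Longrightarrow> orient Q1 Q3 (gpt Qs m a b) \<le> (real m - 1) / real m * orient Q1 Q3 Q4"
proof -
  have mm: "0 < real m" using assms by simp
  have p1: "orient Q2 Q4 Q1 > 0" using o412 orient_cyc[of Q2 Q4 Q1] by simp
  have n1: "orient Q2 Q4 Q3 \<le> 0" using o234 orient_swap[of Q2 Q4 Q3] by simp
  have p2: "orient Q3 Q1 Q2 > 0" using o123 orient_cyc[of Q3 Q1 Q2] by simp
  have n2: "orient Q3 Q1 Q4 \<le> 0" using o134 orient_swap12[of Q3 Q1 Q4] by simp
  have p3: "orient Q4 Q2 Q3 > 0" using o234 orient_cyc[of Q4 Q2 Q3] by simp
  have n3: "orient Q4 Q2 Q1 \<le> 0" using o412 orient_swap12[of Q4 Q2 Q1] orient_cyc[of Q2 Q4 Q1] by simp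
  have p4: "orient Q1 Q3 Q4 > 0" using o134 by simp
  have n4: "orient Q1 Q3 Q2 \<le> 0" using o123 orient_swap[of Q1 Q3 Q2] by simp
  have z: "orient Q2 Q4 Q2 = 0" "orient Q2 Q4 Q4 = 0" "orient Q3 Q1 Q3 = 0" "orient Q3 Q1 Q1 = 0"
     "orient Q4 Q2 Q4 = 0" "orient Q4 Q2 Q2 = 0" "orient Q1 Q3 Q1 = 0" "orient Q1 Q3 Q3 = 0" by simp_all
  show "(a,b) \<noteq> (0,0) \<Longrightarrow> orient Q2 Q4 (gpt Qs m a b) \<le> (real m - 1) / real m * orient Q2 Q4 Q1"
  proof -
    assume h: "(a,b) \<noteq> (0,0)"
    show "orient Q2 Q4 (gpt Qs m a b) \<le> (real m - 1) / real m * orient Q2 Q4 Q1"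
    proof (cases "b \<le> a")
      case True
      from h show ?thesis using True orient_gpt[OF assms, of Q2 Q4] key_ineq[OF p1 n1, of a b m] mm z by auto
    next
      case False
      from h show ?thesis using False orient_gpt[OF assms, of Q2 Q4] key_ineq[OF p1 n1, of b a m] mm z by (auto simp: mult.commute)
    qed
  qed
  show "(a,b) \<noteq> (m,0) \<Longrightarrow> orient Q3 Q1 (gpt Qs m a b) \<le> (real m - 1) / real m * orient Q3 Q1 Q2"
  proof -
    assume h: "(a,b) \<noteq> (m,0)"
    show "orient Q3 Q1 (gpt Qs m a b) \<le> (real m - 1) / real m * orient Q3 Q1 Q2"
    proof (cases "b \<le> a")
      case True
      from h have one: "1 \<le> real m - (real a - real b)" using True assms by auto
      from h show ?thesis using one True orient_gpt[OF assms, of Q3 Q1] key_ineq[OF p2 n2, of "real m - (real a - real b)" 0 m] mm z by auto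
    next
      case False
      from h show ?thesis using False orient_gpt[OF assms, of Q3 Q1] key_ineq[OF p2 n2, of m "real b - real a" m] mm z assms by (auto simp: mult.commute)
    qed
  qed
  show "(a,b) \<noteq> (m,m) \<Longrightarrow> orient Q4 Q2 (gpt Qs m a b) \<le> (real m - 1) / real m * orient Q4 Q2 Q3"
  proof -
    assume h: "(a,b) \<noteq> (m,m)"
    show "orient Q4 Q2 (gpt Qs m a b) \<le> (real m - 1) / real m * orient Q4 Q2 Q3"
    proof (cases "b \<le> a")
      case True
      from h have one: "1 \<le> real m - real b" using True assms by auto
      from h show ?thesis using one True orient_gpt[OF assms, of Q4 Q2] key_ineq[OF p3 n3, of "real m - real b" "real m - real a" m] mm z assms by (simp add: mult.commute add.commute)
    next
      case False
      from h have one: "1 \<le> real m - real a" using False assms by auto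
      from h show ?thesis using one False orient_gpt[OF assms, of Q4 Q2] key_ineq[OF p3 n3, of "real m - real a" "real m - real b" m] mm z assms by (simp add: mult.commute add.commute)
    qed
  qed
  show "(a,b) \<noteq> (0,m) \<Longrightarrow> orient Q1 Q3 (gpt Qs m a b) \<le> (real m - 1) / real m * orient Q1 Q3 Q4"
  proof -
    assume h: "(a,b) \<noteq> (0,m)"
    show "orient Q1 Q3 (gpt Qs m a b) \<le> (real m - 1) / real m * orient Q1 Q3 Q4"
    proof (cases "b \<le> a")
      case True
      from h show ?thesis using True orient_gpt[OF assms, of Q1 Q3] key_ineq[OF p4 n4, of m "real a - real b" m] mm z assms by (auto simp: mult.commute)
    next
      case False
      from h have one: "1 \<le> real m - (real b - real a)" using False assms by auto
      from h show ?thesis using one False orient_gpt[OF assms, of Q1 Q3] key_ineq[OF p4 n4, of "real m - (real b - real a)" 0 m] mm z by auto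
    qed
  qed
qed

end

context quadctx begin

lemma corner_cell:
  assumes "x + 1 \<le> m" "y + 1 \<le> m" "m > 0"
  shows "(x,y) \<noteq> (0,0) \<Longrightarrow> Q1 \<notin> region (cellq Qs m (x,y))"
    and "(x,y) \<noteq> (m-1,0) \<Longrightarrow> Q2 \<notin> region (cellq Qs m (x,y))"
    and "(x,y) \<noteq> (m-1,m-1) \<Longrightarrow> Q3 \<notin> region (cellq Qs m (x,y))"
    and "(x,y) \<noteq> (0,m-1) \<Longrightarrow> Q4 \<notin> region (cellq Qs m (x,y))"
proof -
  have gen: "Qj \<notin> region (cellq Qs m (x,y))"
    if v: "\<And>a b. (a,b) \<in> {(x,y),(x+1,y),(x+1,y+1),(x,y+1)} \<Longrightarrow> orient p q (gpt Qs m a b) \<le> (real m - 1) / real m * orient p q Qj"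
      and pos: "orient p q Qj > 0" for p q Qj
  proof
    let ?d = "(real m - 1) / real m * orient p q Qj"
    assume "Qj \<in> region (cellq Qs m (x,y))"
    moreover have "region (cellq Qs m (x,y)) \<subseteq> {z. orient p q z \<le> ?d}"
      unfolding cellq_def region_def prod.case by (rule hull_minimal) (use v convex_orient_le in auto)
    ultimately have "orient p q Qj \<le> ?d" by blast
    moreover have "?d < orient p q Qj"
    proof -
      have "(real m - 1) / real m < 1" using assms(3) by simp
      from mult_strict_right_mono[OF this pos] show ?thesis by simp
    qed
    ultimately show False by simp
  qed
  have r: "x \<le> m" "x + 1 \<le> m" "y \<le> m" "y + 1 \<le> m" using assms by auto
  have p1: "orient Q2 Q4 Q1 > 0" using o412 orient_cyc[of Q2 Q4 Q1] by simp
  have p2: "orient Q3 Q1 Q2 > 0" using o123 orient_cyc[of Q3 Q1 Q2] by simp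
  have p3: "orient Q4 Q2 Q3 > 0" using o234 orient_cyc[of Q4 Q2 Q3] by simp
  have p4: "orient Q1 Q3 Q4 > 0" using o134 by simp
  show "(x,y) \<noteq> (0,0) \<Longrightarrow> Q1 \<notin> region (cellq Qs m (x,y))"
    by (rule gen[OF _ p1]) (use corner_vertex(1)[of _ m] r assms in fastforce)
  show "(x,y) \<noteq> (m-1,0) \<Longrightarrow> Q2 \<notin> region (cellq Qs m (x,y))"
    by (rule gen[OF _ p2]) (use corner_vertex(2)[of _ m] r assms in fastforce)
  show "(x,y) \<noteq> (m-1,m-1) \<Longrightarrow> Q3 \<notin> region (cellq Qs m (x,y))"
    by (rule gen[OF _ p3]) (use corner_vertex(3)[of _ m] r assms in fastforce)
  show "(x,y) \<noteq> (0,m-1) \<Longrightarrow> Q4 \<notin> region (cellq Qs m (x,y))"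
    by (rule gen[OF _ p4]) (use corner_vertex(4)[of _ m] r assms in fastforce)
qed

end

context lab begin

lemma region_chain:
  "W \<in> Wlev Qs W1 (Suc n) \<Longrightarrow> \<exists>W0\<in>W1. region W \<subseteq> region W0"
proof (induction n arbitrary: W)
  case 0 then show ?case by auto
next
  case (Suc n)
  then obtain P A where W: "W = Pquad Qs P A" "A \<in> W1" "P \<in> Wlev Qs W1 (Suc n)"
    using Wlev_Suc[of Qs W1 n] unfolding nextlev_def by auto
  obtain k where k: "k \<in> Aidx m" "A = Sm Qs m k" using W(2) W1sub by auto
  have "W = cellq P m (ll k)" using W(1) k Pquad_Sm[OF k(1) m0] Sm_cell[OF k(1) m0] by simp
  then have "region W \<subseteq> region P"
    using region_cell_sub[OF ll_range[OF k(1) m0] m0] by (cases "ll k") auto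
  then show ?case using Suc.IH[OF W(3)] by blast
qed

lemma W1_region: "W0 \<in> W1 \<Longrightarrow> region W0 \<subseteq> QQ"
proof -
  assume "W0 \<in> W1"
  then obtain k where k: "k \<in> Aidx m" "W0 = Sm Qs m k" using W1sub by auto
  then have "W0 = cellq Qs m (ll k)" using Sm_cell[OF k(1) m0] by simp
  then show ?thesis using region_cell_sub[OF ll_range[OF k(1) m0] m0, of Qs] region_Qs by (cases "ll k") auto
qed

lemma L_sub: "Llev Qs W1 (Suc n) \<subseteq> QQ"
  unfolding Llev_def using region_chain W1_region by blast

lemma corner_excl:
  shows "Sm Qs m (m-1,0,0,0) \<notin> W1 \<Longrightarrow> Q1 \<notin> Llev Qs W1 (Suc n)"
    and "Sm Qs m (0,m-1,0,0) \<notin> W1 \<Longrightarrow> Q2 \<notin> Llev Qs W1 (Suc n)"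
    and "Sm Qs m (0,0,m-1,0) \<notin> W1 \<Longrightarrow> Q3 \<notin> Llev Qs W1 (Suc n)"
    and "Sm Qs m (0,0,0,m-1) \<notin> W1 \<Longrightarrow> Q4 \<notin> Llev Qs W1 (Suc n)"
proof -
  have idx: "(m-1,0,0,0) \<in> Aidx m" "(0,m-1,0,0) \<in> Aidx m" "(0,0,m-1,0) \<in> Aidx m" "(0,0,0,m-1) \<in> Aidx m"
    using m4 by (auto simp: Aidx_def A1_def A2_def A3_def)
  have cells: "Sm Qs m (m-1,0,0,0) = cellq Qs m (0,0)" "Sm Qs m (0,m-1,0,0) = cellq Qs m (m-1,0)"
    "Sm Qs m (0,0,m-1,0) = cellq Qs m (m-1,m-1)" "Sm Qs m (0,0,0,m-1) = cellq Qs m (0,m-1)"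
    using Sm_cell[OF idx(1) m0] Sm_cell[OF idx(2) m0] Sm_cell[OF idx(3) m0] Sm_cell[OF idx(4) m0]
    by (simp_all add: ll_def)
  have gen: "Qj \<notin> Llev Qs W1 (Suc n)"
    if excl: "\<And>x y. x + 1 \<le> m \<Longrightarrow> y + 1 \<le> m \<Longrightarrow> (x,y) \<noteq> c \<Longrightarrow> Qj \<notin> region (cellq Qs m (x,y))"
      and nc: "cellq Qs m c \<notin> W1" for Qj c
  proof
    assume "Qj \<in> Llev Qs W1 (Suc n)"
    then obtain W where "W \<in> Wlev Qs W1 (Suc n)" "Qj \<in> region W" unfolding Llev_def by blast
    then obtain W0 where W0: "W0 \<in> W1" "Qj \<in> region W0" using region_chain by blast
    then obtain k where k: "k \<in> Aidx m" "W0 = Sm Qs m k" using W1sub by auto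
    then have W0c: "W0 = cellq Qs m (ll k)" using Sm_cell[OF k(1) m0] by simp
    show False
    proof (cases "ll k = c")
      case True then show False using W0c W0(1) nc by simp
    next
      case False
      then show False using excl[OF ll_range[OF k(1) m0]] W0c W0(2) by (cases "ll k") auto
    qed
  qed
  show "Sm Qs m (m-1,0,0,0) \<notin> W1 \<Longrightarrow> Q1 \<notin> Llev Qs W1 (Suc n)"
    using gen[of "(0,0)" Q1] corner_cell(1)[OF _ _ m0] cells(1) by auto
  show "Sm Qs m (0,m-1,0,0) \<notin> W1 \<Longrightarrow> Q2 \<notin> Llev Qs W1 (Suc n)"
    using gen[of "(m-1,0)" Q2] corner_cell(2)[OF _ _ m0] cells(2) by auto
  show "Sm Qs m (0,0,m-1,0) \<notin> W1 \<Longrightarrow> Q3 \<notin> Llev Qs W1 (Suc n)"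
    using gen[of "(m-1,m-1)" Q3] corner_cell(3)[OF _ _ m0] cells(3) by auto
  show "Sm Qs m (0,0,0,m-1) \<notin> W1 \<Longrightarrow> Q4 \<notin> Llev Qs W1 (Suc n)"
    using gen[of "(0,m-1)" Q4] corner_cell(4)[OF _ _ m0] cells(4) by auto
qed

definition Cn :: "nat \<Rightarrow> pt set" where
  "Cn n = (\<Union>W\<in>Wlev Qs W1 (Suc n). PV Qs W ` QQ)"

lemma mouth_img: "bot u V \<in> PV Qs V ` QQ" "top u V \<in> PV Qs V ` QQ"
   "lft v V \<in> PV Qs V ` QQ" "rgt v V \<in> PV Qs V ` QQ"
proof -
  show "bot u V \<in> PV Qs V ` QQ" by (subst mouth_PV(1)[OF uv_range(1,2)]) (rule imageI[OF mouth_PV(5)[OF uv_range(1,2)]])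
  show "top u V \<in> PV Qs V ` QQ" by (subst mouth_PV(2)[OF uv_range(1,2)]) (rule imageI[OF mouth_PV(6)[OF uv_range(1,2)]])
  show "lft v V \<in> PV Qs V ` QQ" by (subst mouth_PV(3)[OF uv_range(3,4)]) (rule imageI[OF mouth_PV(7)[OF uv_range(3,4)]])
  show "rgt v V \<in> PV Qs V ` QQ" by (subst mouth_PV(4)[OF uv_range(3,4)]) (rule imageI[OF mouth_PV(8)[OF uv_range(3,4)]])
qed

lemma Cn_pc: "path_connected (Cn n)"
  unfolding Cn_def
proof (rule pc_union[where R = "Er (Wlev Qs W1 (Suc n))"])
  show "path_connected (PV Qs W ` QQ)" for W
    by (rule path_connected_continuous_image[OF PV_cont]) (simp add: convex_imp_path_connected convex_convex_hull)
  show "\<forall>X\<in>Wlev Qs W1 (Suc n). \<forall>Y\<in>Wlev Qs W1 (Suc n). (Er (Wlev Qs W1 (Suc n)))\<^sup>*\<^sup>* X Y"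
    using Inv_lev unfolding Inv_def by blast
  fix X Y assume "Er (Wlev Qs W1 (Suc n)) X Y"
  then have Y: "Y \<in> Wlev Qs W1 (Suc n)" and e: "EE X Y" unfolding Er_def by auto
  have ne: "A \<inter> B \<noteq> {}" if "z \<in> A" "z \<in> B" for z A B using that by blast
  have "PV Qs X ` QQ \<inter> PV Qs Y ` QQ \<noteq> {}"
    using e unfolding EE_def
  proof (elim disjE)
    assume "vertq X Y"
    then have "top u X = bot u Y" unfolding vertq_def top_def bot_def by simp
    then show ?thesis using ne[OF mouth_img(2)[of X]] mouth_img(1)[of Y] by simp
  next
    assume "vertq Y X"
    then have "top u Y = bot u X" unfolding vertq_def top_def bot_def by simp
    then show ?thesis using ne[OF mouth_img(1)[of X]] mouth_img(2)[of Y] by simp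
  next
    assume "horq X Y"
    then have "rgt v X = lft v Y" unfolding horq_def rgt_def lft_def by simp
    then show ?thesis using ne[OF mouth_img(4)[of X]] mouth_img(3)[of Y] by simp
  next
    assume "horq Y X"
    then have "rgt v Y = lft v X" unfolding horq_def rgt_def lft_def by simp
    then show ?thesis using ne[OF mouth_img(3)[of X]] mouth_img(4)[of Y] by simp
  qed
  then show "Y \<in> Wlev Qs W1 (Suc n) \<and> PV Qs X ` QQ \<inter> PV Qs Y ` QQ \<noteq> {}" using Y by blast
qed

lemma Cn_sub: "Cn n \<subseteq> Llev Qs W1 (Suc n)"
  unfolding Cn_def Llev_def using PV_region by blast

lemma Cn_mouths: "bot u Qs \<in> Cn n" "top u Qs \<in> Cn n" "lft v Qs \<in> Cn n" "rgt v Qs \<in> Cn n"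
proof -
  have I: "X \<in> Wlev Qs W1 (Suc n) \<Longrightarrow> z \<in> PV Qs X ` QQ \<Longrightarrow> z \<in> Cn n" for X z
    unfolding Cn_def by blast
  obtain Xb where Xb: "Xb \<in> Wlev Qs W1 (Suc n)" "bot u Xb = bot u Qs" using Inv_lev unfolding Inv_def by blast
  obtain Xt where Xt: "Xt \<in> Wlev Qs W1 (Suc n)" "top u Xt = top u Qs" using Inv_lev unfolding Inv_def by blast
  obtain Xl where Xl: "Xl \<in> Wlev Qs W1 (Suc n)" "lft v Xl = lft v Qs" using Inv_lev unfolding Inv_def by blast
  obtain Xr where Xr: "Xr \<in> Wlev Qs W1 (Suc n)" "rgt v Xr = rgt v Qs" using Inv_lev unfolding Inv_def by blast
  show "bot u Qs \<in> Cn n" using I[OF Xb(1) mouth_img(1)[of Xb]] Xb(2) by simp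
  show "top u Qs \<in> Cn n" using I[OF Xt(1) mouth_img(2)[of Xt]] Xt(2) by simp
  show "lft v Qs \<in> Cn n" using I[OF Xl(1) mouth_img(3)[of Xl]] Xl(2) by simp
  show "rgt v Qs \<in> Cn n" using I[OF Xr(1) mouth_img(4)[of Xr]] Xr(2) by simp
qed

lemma not_pc:
  assumes c13: "\<not> (Sm Qs m (m-1,0,0,0) \<in> W1 \<and> Sm Qs m (0,0,m-1,0) \<in> W1)"
    and c24: "\<not> (Sm Qs m (0,m-1,0,0) \<in> W1 \<and> Sm Qs m (0,0,0,m-1) \<in> W1)"
  shows "\<not> path_connected (QQ - Llev Qs W1 (Suc n))"
proof
  let ?L = "Llev Qs W1 (Suc n)"
  assume pc: "path_connected (QQ - ?L)"
  have Qin: "Q1 \<in> QQ" "Q2 \<in> QQ" "Q3 \<in> QQ" "Q4 \<in> QQ" by (simp_all add: hull_inc)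
  have CL: "Cn n \<subseteq> ?L" "Cn n \<subseteq> QQ" using Cn_sub L_sub by blast+
  have hb: "PV Qs Vsq (bot u Qs) $ 2 = 0" "PV Qs Vsq (top u Qs) $ 2 = 1"
    "PV Qs Vsq (lft v Qs) $ 1 = 0" "PV Qs Vsq (rgt v Qs) $ 1 = 1"
    using hmouth[OF uv_range(1,2)] hmouth[OF uv_range(3,4)] by auto
  have sepA: False if "p \<in> QQ - ?L" "q \<in> QQ - ?L" "PV Qs Vsq p $ 1 = 0" "PV Qs Vsq q $ 1 = 1" for p q
    using sep_gen[OF CL Cn_pc Cn_mouths(1) Cn_mouths(2)] pc that hb path_connected_component by blast
  have sepB: False if "p \<in> QQ - ?L" "q \<in> QQ - ?L" "PV Qs Vsq p $ 2 = 0" "PV Qs Vsq q $ 2 = 1" for p q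
    using sep_gen[OF CL Cn_pc Cn_mouths(3) Cn_mouths(4)] pc that hb path_connected_component by blast
  have "Q1 \<notin> ?L \<or> Q3 \<notin> ?L" using c13 corner_excl(1,3) by blast
  moreover have "Q2 \<notin> ?L \<or> Q4 \<notin> ?L" using c24 corner_excl(2,4) by blast
  ultimately show False
    using sepA[of Q1 Q2] sepB[of Q2 Q3] sepB[of Q1 Q4] sepA[of Q4 Q3] Qin hQ by blast
qed

end

lemma conn_lpc_pc:
  assumes "connected S" "locally path_connected S"
  shows "path_connected S"
  unfolding path_connected_component_set
  using assms path_component_eq_connected_component_set connected_component_eq_self by metis

lemma walk_rt:
  assumes "is_walk E V vs" "\<And>x y. x \<in> V \<Longrightarrow> y \<in> V \<Longrightarrow> E x y \<Longrightarrow> R x y"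
  shows "R\<^sup>*\<^sup>* (hd vs) (last vs)"
  using assms(1)
proof (induction vs)
  case Nil then show ?case by (simp add: is_walk_def)
next
  case (Cons a vs)
  show ?case
  proof (cases "vs = []")
    case True then show ?thesis by simp
  next
    case False
    have all: "\<forall>i. Suc i < length (a#vs) \<longrightarrow> E ((a#vs)!i) ((a#vs)!Suc i)"
      using Cons.prems unfolding is_walk_def by blast
    have "\<forall>i. Suc i < length vs \<longrightarrow> E (vs!i) (vs!Suc i)"
    proof (intro allI impI)
      fix i assume "Suc i < length vs"
      then show "E (vs!i) (vs!Suc i)" using all[rule_format, of "Suc i"] by simp
    qed
    then have w: "is_walk E V vs" using Cons.prems False unfolding is_walk_def by auto
    have "E a (hd vs)" using Cons.prems False unfolding is_walk_def
      by (metis hd_conv_nth length_Cons length_greater_0_conv less_Suc_eq_0_disj nth_Cons_0 nth_Cons_Suc)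
    moreover have "a \<in> V" "hd vs \<in> V" using Cons.prems False unfolding is_walk_def by auto
    ultimately have "R a (hd vs)" using assms(2) by blast
    then show ?thesis using Cons.IH[OF w] False by simp
  qed
qed

context lab begin

lemma finite_Aidx: "finite (Aidx m)"
proof -
  have "Aidx m \<subseteq> {..m} \<times> {..m} \<times> {..m} \<times> {..m}" by (auto simp: Aidx_def A1_def A2_def A3_def)
  then show ?thesis by (rule finite_subset) simp
qed

lemma finite_W1: "finite W1"
  using finite_subset[OF W1sub] finite_Aidx by blast

lemma finite_lev: "finite (Wlev Qs W1 (Suc n))"
proof (induction n)
  case 0 then show ?case using finite_W1 by simp
next
  case (Suc n)
  have "nextlev Qs W1 (Wlev Qs W1 (Suc n)) = {Pquad Qs W W' | W W'. W \<in> Wlev Qs W1 (Suc n) \<and> W' \<in> W1}"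
    unfolding nextlev_def by blast
  moreover have "finite {Pquad Qs W W' | W W'. W \<in> Wlev Qs W1 (Suc n) \<and> W' \<in> W1}"
    using finite_image_set2[of "\<lambda>W. W \<in> Wlev Qs W1 (Suc n)" "\<lambda>W'. W' \<in> W1" "Pquad Qs"] Suc.IH finite_W1 by simp
  ultimately show ?case by (simp only: Wlev_Suc)
qed

lemma closed_region: "closed (region W)"
  by (cases W) (auto simp: region_def intro!: compact_imp_closed[OF compact_convex_hull[OF finite_imp_compact]])

lemma closed_L: "closed (Llev Qs W1 (Suc n))"
  unfolding Llev_def using finite_lev closed_region by (intro closed_UN) auto

lemma not_conn:
  assumes c13: "\<not> (Sm Qs m (m-1,0,0,0) \<in> W1 \<and> Sm Qs m (0,0,m-1,0) \<in> W1)"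
    and c24: "\<not> (Sm Qs m (0,m-1,0,0) \<in> W1 \<and> Sm Qs m (0,0,0,m-1) \<in> W1)"
  shows "\<not> connected (QQ - Llev Qs W1 (Suc n))"
proof
  let ?L = "Llev Qs W1 (Suc n)"
  assume c: "connected (QQ - ?L)"
  have "openin (top_of_set QQ) (QQ - (QQ \<inter> ?L))"
    by (rule openin_diff[OF openin_subtopology_self closedin_closed_Int[OF closed_L]])
  moreover have "QQ - (QQ \<inter> ?L) = QQ - ?L" by blast
  ultimately have o: "openin (top_of_set QQ) (QQ - ?L)" by simp
  have "locally path_connected QQ" by (simp add: convex_imp_locally_path_connected convex_convex_hull)
  then have "locally path_connected (QQ - ?L)" using locally_open_subset o by blast
  then have "path_connected (QQ - ?L)" using conn_lpc_pc c by blast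
  then show False using not_pc[OF c13 c24] by blast
qed

end

lemma W1conn_from_tree:
  assumes q: "quadctx Q1 Q2 Q3 Q4" and m: "m > 0" and sub: "W1 \<subseteq> Sm (Q1,Q2,Q3,Q4) m ` Aidx m"
    and t: "is_tree adjacent W1"
  shows "\<forall>X\<in>W1. \<forall>Y\<in>W1. (Er W1)\<^sup>*\<^sup>* X Y"
proof (intro ballI)
  fix X Y assume XY: "X \<in> W1" "Y \<in> W1"
  obtain vs where vs: "is_walk adjacent W1 vs" "hd vs = X" "last vs = Y"
    using t XY unfolding is_tree_def graph_connected_def by blast
  have "Er W1 a b" if ab: "a \<in> W1" "b \<in> W1" "adjacent a b" for a b
  proof -
    obtain k where k: "k \<in> Aidx m" "a = Sm (Q1,Q2,Q3,Q4) m k" using ab(1) sub by blast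
    obtain k' where k': "k' \<in> Aidx m" "b = Sm (Q1,Q2,Q3,Q4) m k'" using ab(2) sub by blast
    have a: "a = cellq (Q1,Q2,Q3,Q4) m (ll k)" using Sm_cell[OF k(1) m] k by simp
    have b: "b = cellq (Q1,Q2,Q3,Q4) m (ll k')" using Sm_cell[OF k'(1) m] k' by simp
    have r: "fst (ll k) + 1 \<le> m" "snd (ll k) + 1 \<le> m" "fst (ll k') + 1 \<le> m" "snd (ll k') + 1 \<le> m"
      using quadctx.ll_range[OF q k(1) m] quadctx.ll_range[OF q k'(1) m] by auto
    have "EE a b" using quadctx.cell_adj[OF q r(1,2) r(3,4) m] ab(3) a b by (cases "ll k", cases "ll k'") auto
    then show ?thesis using ab unfolding Er_def by blast
  qed
  then show "(Er W1)\<^sup>*\<^sup>* X Y" using walk_rt[OF vs(1)] vs by metis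
qed

theorem corollary4p4:
  fixes Q1 Q2 Q3 Q4 :: "real^2" and m :: nat and W1 :: "quad set"
  assumes "convex_quad_ccw (Q1, Q2, Q3, Q4)"
    and "dist Q1 Q3 \<le> dist Q2 Q4"
    and "m \<ge> 4"
    and "labyrinth_set (Q1, Q2, Q3, Q4) m W1"
  shows "\<forall>n\<ge>1. \<not> path_connected (convex hull {Q1, Q2, Q3, Q4} - Llev (Q1, Q2, Q3, Q4) W1 n)
              \<and> \<not> connected (convex hull {Q1, Q2, Q3, Q4} - Llev (Q1, Q2, Q3, Q4) W1 n)"
proof (intro allI impI)
  fix n :: nat assume n: "n \<ge> 1"
  then obtain n' where n': "n = Suc n'" by (cases n) auto
  have q: "quadctx Q1 Q2 Q3 Q4" using assms(1) by (simp add: quadctx_def)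
  from assms(4) have
    l2: "W1 \<subseteq> Sset (Q1,Q2,Q3,Q4) m" and l3: "is_tree adjacent W1"
    and l4: "\<exists>!(k1,k2). (k1,k2,0,0) \<in> Aidx m \<and> Sm (Q1,Q2,Q3,Q4) m (k1,k2,0,0) \<in> W1 \<and> Sm (Q1,Q2,Q3,Q4) m (0,0,k2,k1) \<in> W1"
    and l5: "\<exists>!(k1,k4). (k1,0,0,k4) \<in> Aidx m \<and> Sm (Q1,Q2,Q3,Q4) m (k1,0,0,k4) \<in> W1 \<and> Sm (Q1,Q2,Q3,Q4) m (0,k1,k4,0) \<in> W1"
    and c13: "\<not> (Sm (Q1,Q2,Q3,Q4) m (m-1,0,0,0) \<in> W1 \<and> Sm (Q1,Q2,Q3,Q4) m (0,0,m-1,0) \<in> W1)"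
    and c24: "\<not> (Sm (Q1,Q2,Q3,Q4) m (0,m-1,0,0) \<in> W1 \<and> Sm (Q1,Q2,Q3,Q4) m (0,0,0,m-1) \<in> W1)"
    unfolding labyrinth_set_def by simp_all
  have sub: "W1 \<subseteq> Sm (Q1,Q2,Q3,Q4) m ` Aidx m" using l2 by (simp add: Sset_def)
  have m0: "m > 0" using assms(3) by simp
  have conn: "\<forall>X\<in>W1. \<forall>Y\<in>W1. (Er W1)\<^sup>*\<^sup>* X Y"
    by (rule W1conn_from_tree[OF q m0 sub l3])
  obtain p where p: "case p of (k1,k2) \<Rightarrow> (k1,k2,0,0) \<in> Aidx m \<and> Sm (Q1,Q2,Q3,Q4) m (k1,k2,0,0) \<in> W1 \<and> Sm (Q1,Q2,Q3,Q4) m (0,0,k2,k1) \<in> W1"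
    using ex1_implies_ex[OF l4] by blast
  obtain k1 k2 where pk: "p = (k1,k2)" by (cases p)
  have e1: "(k1,k2,0,0) \<in> Aidx m" "Sm (Q1,Q2,Q3,Q4) m (k1,k2,0,0) \<in> W1" "Sm (Q1,Q2,Q3,Q4) m (0,0,k2,k1) \<in> W1"
    using p pk by simp_all
  obtain p' where p': "case p' of (k1,k4) \<Rightarrow> (k1,0,0,k4) \<in> Aidx m \<and> Sm (Q1,Q2,Q3,Q4) m (k1,0,0,k4) \<in> W1 \<and> Sm (Q1,Q2,Q3,Q4) m (0,k1,k4,0) \<in> W1"
    using ex1_implies_ex[OF l5] by blast
  obtain j1 j4 where pj: "p' = (j1,j4)" by (cases p')
  have e2: "(j1,0,0,j4) \<in> Aidx m" "Sm (Q1,Q2,Q3,Q4) m (j1,0,0,j4) \<in> W1" "Sm (Q1,Q2,Q3,Q4) m (0,j1,j4,0) \<in> W1"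
    using p' pj by simp_all
  have kk: "k1 + k2 = m - 1" using e1(1) by (auto simp: Aidx_def A1_def A2_def A3_def)
  have jj: "j1 + j4 = m - 1" using e2(1) by (auto simp: Aidx_def A1_def A2_def A3_def)
  have labi: "lab Q1 Q2 Q3 Q4 m W1 k1 k2 j1 j4"
    unfolding lab_def lab_axioms_def using q assms(3) sub conn kk e1(2,3) jj e2(2,3) by blast
  have "\<not> path_connected (convex hull {Q1, Q2, Q3, Q4} - Llev (Q1, Q2, Q3, Q4) W1 (Suc n'))"
    by (rule lab.not_pc[OF labi c13 c24])
  moreover have "\<not> connected (convex hull {Q1, Q2, Q3, Q4} - Llev (Q1, Q2, Q3, Q4) W1 (Suc n'))"
    by (rule lab.not_conn[OF labi c13 c24])
  ultimately show "\<not> path_connected (convex hull {Q1, Q2, Q3, Q4} - Llev (Q1, Q2, Q3, Q4) W1 n)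
      \<and> \<not> connected (convex hull {Q1, Q2, Q3, Q4} - Llev (Q1, Q2, Q3, Q4) W1 n)"
    using n' by simp
qed

end
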